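(* Let $X=\{F=0\}\subset\mathbb{P}^n$ be a Frobenius nonclassical hypersurface over $\mathbb{F}_q$ which is irreducible over $\mathbb{F}_q$ and contains an $\mathbb{F}_q$-point at which $X$ is smooth. Then $X$ is geometrically irreducible.
   Context: $X$ is Frobenius nonclassical if $F$ divides $\sum_{i=0}^n x_i^q\frac{\partial F}{\partial x_i}$. *)

theory Defs
  imports "HOL-Library.Poly_Mapping" "HOL-Computational_Algebra.Computational_Algebra"
begin

text \<open>Multivariate polynomials in the variables x_0, x_1, ... over 'a:
  a polynomial maps each monomial (exponent vector, nat to nat, finitely supported)
  to its coefficient.\<close>
type_synonym 'a mpoly = "(nat \<Rightarrow>\<^sub>0 nat) \<Rightarrow>\<^sub>0 'a"

definition mp_var :: "nat \<Rightarrow> 'a::comm_semiring_1 mpoly" where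
  "mp_var i = Poly_Mapping.single (Poly_Mapping.single i 1) 1"

definition mp_eval :: "'a::comm_semiring_1 mpoly \<Rightarrow> (nat \<Rightarrow> 'a) \<Rightarrow> 'a" where
  "mp_eval p x = (\<Sum>m\<in>Poly_Mapping.keys p. Poly_Mapping.lookup p m * (\<Prod>i\<in>Poly_Mapping.keys m. x i ^ Poly_Mapping.lookup m i))"

definition mp_pderiv :: "nat \<Rightarrow> 'a::comm_semiring_1 mpoly \<Rightarrow> 'a mpoly" where
  "mp_pderiv i p = (\<Sum>m\<in>Poly_Mapping.keys p.
      Poly_Mapping.single (m - Poly_Mapping.single i 1) (of_nat (Poly_Mapping.lookup m i) * Poly_Mapping.lookup p m))"

definition mp_homogeneous_in :: "nat \<Rightarrow> nat \<Rightarrow> 'a::zero mpoly \<Rightarrow> bool" where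
  "mp_homogeneous_in n d p \<longleftrightarrow>
     (\<forall>m\<in>Poly_Mapping.keys p. Poly_Mapping.keys m \<subseteq> {..n} \<and> (\<Sum>i\<in>Poly_Mapping.keys m. Poly_Mapping.lookup m i) = d)"

definition frobenius_nonclassical :: "nat \<Rightarrow> nat \<Rightarrow> 'a::comm_semiring_1 mpoly \<Rightarrow> bool" where
  "frobenius_nonclassical q n F \<longleftrightarrow> F dvd (\<Sum>i\<le>n. mp_var i ^ q * mp_pderiv i F)"

definition smooth_point :: "nat \<Rightarrow> 'a::comm_semiring_1 mpoly \<Rightarrow> (nat \<Rightarrow> 'a) \<Rightarrow> bool" where
  "smooth_point n F P \<longleftrightarrow> (\<exists>i\<le>n. P i \<noteq> 0) \<and> mp_eval F P = 0 \<and>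
     (\<exists>i\<le>n. mp_eval (mp_pderiv i F) P \<noteq> 0)"

end

theory Submission
  imports Defs
begin


definition rhom :: "('a::comm_ring_1 \<Rightarrow> 'b::comm_ring_1) \<Rightarrow> bool" where
  "rhom f \<longleftrightarrow> f 0 = 0 \<and> f 1 = 1 \<and> (\<forall>x y. f (x + y) = f x + f y) \<and> (\<forall>x y. f (x * y) = f x * f y)"

lemma rhomI: "f 0 = 0 \<Longrightarrow> f 1 = 1 \<Longrightarrow> (\<And>x y. f (x + y) = f x + f y) \<Longrightarrow> (\<And>x y. f (x * y) = f x * f y) \<Longrightarrow> rhom f"
  unfolding rhom_def by blast

context fixes f :: "'a::comm_ring_1 \<Rightarrow> 'b::comm_ring_1" assumes f: "rhom f"
begin
lemma rhom_0: "f 0 = 0" using f by (simp add: rhom_def)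
lemma rhom_1: "f 1 = 1" using f by (simp add: rhom_def)
lemma rhom_add: "f (x + y) = f x + f y" using f by (simp add: rhom_def)
lemma rhom_mult: "f (x * y) = f x * f y" using f by (simp add: rhom_def)
lemma rhom_uminus: "f (- x) = - f x"
proof -
  have "f (- x) + f x = 0" by (metis rhom_add rhom_0 left_minus)
  thus ?thesis by (simp add: eq_neg_iff_add_eq_0)
qed
lemma rhom_diff: "f (x - y) = f x - f y"
  using rhom_add[of x "- y"] rhom_uminus[of y] by simp
lemma rhom_sum: "f (sum g A) = (\<Sum>a\<in>A. f (g a))"
  by (induction A rule: infinite_finite_induct) (simp_all add: rhom_0 rhom_add)
lemma rhom_prod: "f (prod g A) = (\<Prod>a\<in>A. f (g a))"
  by (induction A rule: infinite_finite_induct) (simp_all add: rhom_1 rhom_mult)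
lemma rhom_power: "f (x ^ n) = f x ^ n"
  by (induction n) (simp_all add: rhom_1 rhom_mult)
lemma rhom_dvd: "x dvd y \<Longrightarrow> f x dvd f y"
  by (metis dvd_def rhom_mult)
lemma rhom_unit: "x dvd 1 \<Longrightarrow> f x dvd 1"
  using rhom_dvd rhom_1 by metis
lemma rhom_of_nat: "f (of_nat n) = of_nat n"
  by (induction n) (simp_all add: rhom_0 rhom_1 rhom_add)
end

lemma rhom_id: "rhom (\<lambda>x. x)" by (simp add: rhom_def)
lemma rhom_comp: "rhom f \<Longrightarrow> rhom g \<Longrightarrow> rhom (\<lambda>x. f (g x))"
  by (simp add: rhom_def)

lemma rhom_field_inj:
  fixes f :: "'a::field \<Rightarrow> 'b::field"
  assumes "rhom f" shows "inj f"
proof (rule injI)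
  fix x y assume e: "f x = f y"
  show "x = y"
  proof (rule ccontr)
    assume "x \<noteq> y"
    hence "f ((x - y) * inverse (x - y)) = 1" using rhom_1[OF assms] by simp
    thus False using e by (simp add: rhom_mult[OF assms] rhom_diff[OF assms])
  qed
qed

lemma lookup_map_hom: "h 0 = 0 \<Longrightarrow> Poly_Mapping.lookup (Poly_Mapping.map h f) k = h (Poly_Mapping.lookup f k)"
  by transfer (simp add: when_def)

lemma pm_repr: "f = (\<Sum>m\<in>Poly_Mapping.keys f. Poly_Mapping.single m (Poly_Mapping.lookup f m))"
  for f :: "'k \<Rightarrow>\<^sub>0 'v::comm_monoid_add"
proof (rule poly_mapping_eqI)
  fix k
  have "Poly_Mapping.lookup (\<Sum>m\<in>Poly_Mapping.keys f. Poly_Mapping.single m (Poly_Mapping.lookup f m)) k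
     = (\<Sum>m\<in>Poly_Mapping.keys f. (if m = k then Poly_Mapping.lookup f m else 0))"
    by (simp add: lookup_sum lookup_single when_def)
  also have "\<dots> = Poly_Mapping.lookup f k"
    by (simp add: sum.delta' in_keys_iff)
  finally show "Poly_Mapping.lookup f k = Poly_Mapping.lookup (\<Sum>m\<in>Poly_Mapping.keys f. Poly_Mapping.single m (Poly_Mapping.lookup f m)) k" ..
qed

definition mc :: "'a::comm_ring_1 \<Rightarrow> 'a mpoly" where
  "mc a = Poly_Mapping.single 0 a"

lemma rhom_mc: "rhom mc"
  by (rule rhomI) (simp_all add: mc_def single_add mult_single)

definition mon :: "(nat \<Rightarrow>\<^sub>0 nat) \<Rightarrow> (nat \<Rightarrow> 'c::comm_ring_1) \<Rightarrow> 'c" where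
  "mon m v = (\<Prod>i\<in>Poly_Mapping.keys m. v i ^ Poly_Mapping.lookup m i)"

lemma mon_superset: "finite S \<Longrightarrow> Poly_Mapping.keys m \<subseteq> S \<Longrightarrow> mon m v = (\<Prod>i\<in>S. v i ^ Poly_Mapping.lookup m i)"
  unfolding mon_def by (rule prod.mono_neutral_left) (auto simp: in_keys_iff)

lemma mon_zero [simp]: "mon 0 v = 1" by (simp add: mon_def)

lemma mon_add: "mon (m1 + m2) v = mon m1 v * mon m2 v"
proof -
  let ?S = "Poly_Mapping.keys m1 \<union> Poly_Mapping.keys m2"
  have "mon (m1 + m2) v = (\<Prod>i\<in>?S. v i ^ Poly_Mapping.lookup (m1 + m2) i)"
    by (rule mon_superset) (use keys_add[of m1 m2] in auto)
  also have "\<dots> = (\<Prod>i\<in>?S. v i ^ Poly_Mapping.lookup m1 i * v i ^ Poly_Mapping.lookup m2 i)"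
    by (simp add: lookup_add power_add)
  also have "\<dots> = mon m1 v * mon m2 v"
    by (simp add: prod.distrib mon_superset[of ?S])
  finally show ?thesis .
qed

lemma mon_hom: "rhom f \<Longrightarrow> f (mon m v) = mon m (\<lambda>i. f (v i))"
  by (simp add: mon_def rhom_prod rhom_power)

definition ev :: "('b::comm_ring_1 \<Rightarrow> 'c::comm_ring_1) \<Rightarrow> (nat \<Rightarrow> 'c) \<Rightarrow> 'b mpoly \<Rightarrow> 'c" where
  "ev h v p = (\<Sum>m\<in>Poly_Mapping.keys p. h (Poly_Mapping.lookup p m) * mon m v)"

lemma mp_eval_ev: "mp_eval p x = ev (\<lambda>a. a) x p"
  by (simp add: mp_eval_def ev_def mon_def)

context fixes h :: "'b::comm_ring_1 \<Rightarrow> 'c::comm_ring_1" assumes h: "rhom h"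
begin

lemma ev_superset: "finite S \<Longrightarrow> Poly_Mapping.keys p \<subseteq> S \<Longrightarrow>
   ev h v p = (\<Sum>m\<in>S. h (Poly_Mapping.lookup p m) * mon m v)"
  unfolding ev_def by (rule sum.mono_neutral_left) (auto simp: in_keys_iff rhom_0[OF h])

lemma ev_add: "ev h v (p + q) = ev h v p + ev h v q"
proof -
  let ?S = "Poly_Mapping.keys p \<union> Poly_Mapping.keys q"
  have "ev h v (p + q) = (\<Sum>m\<in>?S. h (Poly_Mapping.lookup (p + q) m) * mon m v)"
    by (rule ev_superset) (use keys_add[of p q] in auto)
  also have "\<dots> = (\<Sum>m\<in>?S. h (Poly_Mapping.lookup p m) * mon m v + h (Poly_Mapping.lookup q m) * mon m v)"
    by (simp add: lookup_add rhom_add[OF h] algebra_simps)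
  also have "\<dots> = ev h v p + ev h v q"
    by (simp add: sum.distrib ev_superset[of ?S])
  finally show ?thesis .
qed

lemma ev_zero: "ev h v 0 = 0" by (simp add: ev_def)

lemma ev_sum: "ev h v (sum g A) = (\<Sum>a\<in>A. ev h v (g a))"
  by (induction A rule: infinite_finite_induct) (simp_all add: ev_zero ev_add)

lemma ev_single: "ev h v (Poly_Mapping.single m a) = h a * mon m v"
  by (cases "a = 0") (simp_all add: ev_def rhom_0[OF h])

lemma ev_mult: "ev h v (p * q) = ev h v p * ev h v q"
proof -
  let ?A = "Poly_Mapping.keys p" and ?B = "Poly_Mapping.keys q"
  have "p * q = (\<Sum>m\<in>?A. Poly_Mapping.single m (Poly_Mapping.lookup p m)) * (\<Sum>m\<in>?B. Poly_Mapping.single m (Poly_Mapping.lookup q m))"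
    using pm_repr[of p] pm_repr[of q] by simp
  also have "\<dots> = (\<Sum>m\<in>?A. \<Sum>m'\<in>?B. Poly_Mapping.single (m + m') (Poly_Mapping.lookup p m * Poly_Mapping.lookup q m'))"
    by (simp add: sum_product mult_single)
  finally have "ev h v (p * q) = (\<Sum>m\<in>?A. \<Sum>m'\<in>?B. h (Poly_Mapping.lookup p m) * mon m v * (h (Poly_Mapping.lookup q m') * mon m' v))"
    by (simp add: ev_sum ev_single rhom_mult[OF h] mon_add mult_ac)
  also have "\<dots> = ev h v p * ev h v q"
    by (simp add: ev_def sum_product)
  finally show ?thesis .
qed

lemma ev_one: "ev h v 1 = 1"
proof -
  have "(1::'b mpoly) = Poly_Mapping.single 0 1" by simp
  thus ?thesis by (metis ev_single rhom_1[OF h] mon_zero mult_1)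
qed

lemma rhom_ev: "rhom (ev h v)"
  by (rule rhomI) (simp_all add: ev_zero ev_one ev_add ev_mult)

lemma ev_mc: "ev h v (mc a) = h a"
  by (simp add: mc_def ev_single)

lemma ev_var: "ev h v (mp_var i) = v i"
  by (simp add: mp_var_def ev_single rhom_1[OF h] mon_def)

end

lemma single_pow: "(Poly_Mapping.single (Poly_Mapping.single i 1) (1::'a::comm_ring_1)) ^ k = Poly_Mapping.single (Poly_Mapping.single i k) 1"
  for i :: nat
proof (induction k)
  case 0 thus ?case by simp
next
  case (Suc k) thus ?case by (simp add: mult_single single_add[symmetric])
qed

lemma prod_single: "finite S \<Longrightarrow> (\<Prod>i\<in>S. Poly_Mapping.single (g i) (1::'a::comm_ring_1)) = Poly_Mapping.single (\<Sum>i\<in>S. g i) 1"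
  for g :: "_ \<Rightarrow> nat \<Rightarrow>\<^sub>0 nat"
proof (induction S rule: finite_induct)
  case empty thus ?case by simp
next
  case (insert x F) thus ?case by (simp add: mult_single)
qed

lemma mon_var: "mon m mp_var = (Poly_Mapping.single m (1::'a::comm_ring_1))"
proof -
  have "mon m mp_var = (\<Prod>i\<in>Poly_Mapping.keys m. Poly_Mapping.single (Poly_Mapping.single i (Poly_Mapping.lookup m i)) (1::'a))"
    unfolding mon_def mp_var_def using single_pow by (intro prod.cong) auto
  also have "\<dots> = Poly_Mapping.single (\<Sum>i\<in>Poly_Mapping.keys m. Poly_Mapping.single i (Poly_Mapping.lookup m i)) 1"
    by (simp add: prod_single)
  also have "(\<Sum>i\<in>Poly_Mapping.keys m. Poly_Mapping.single i (Poly_Mapping.lookup m i)) = m"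
    using pm_repr[of m] by simp
  finally show ?thesis .
qed

lemma ev_mc_var: "ev mc mp_var f = f"
proof -
  have "ev mc mp_var f = (\<Sum>m\<in>Poly_Mapping.keys f. Poly_Mapping.single m (Poly_Mapping.lookup f m))"
    unfolding ev_def by (simp add: mon_var mc_def mult_single)
  thus ?thesis using pm_repr[of f] by simp
qed

lemma hom_ext: "rhom \<phi> \<Longrightarrow> \<phi> f = ev (\<lambda>a. \<phi> (mc a)) (\<lambda>i. \<phi> (mp_var i)) f"
proof -
  assume h: "rhom \<phi>"
  have "\<phi> f = \<phi> (ev mc mp_var f)" by (simp add: ev_mc_var)
  also have "\<dots> = ev (\<lambda>a. \<phi> (mc a)) (\<lambda>i. \<phi> (mp_var i)) f"
    unfolding ev_def by (simp add: rhom_sum[OF h] rhom_mult[OF h] mon_hom[OF h])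
  finally show ?thesis .
qed

lemma hom_eq:
  assumes "rhom \<phi>" "rhom \<psi>" "\<And>a. \<phi> (mc a) = \<psi> (mc a)" "\<And>i. \<phi> (mp_var i) = \<psi> (mp_var i)"
  shows "\<phi> f = \<psi> f"
  using hom_ext[OF assms(1), of f] hom_ext[OF assms(2), of f] assms(3,4) by simp

lemma ev_comp: "rhom h \<Longrightarrow> rhom g \<Longrightarrow> g (ev h v f) = ev (\<lambda>a. g (h a)) (\<lambda>i. g (v i)) f"
  by (subst hom_ext[OF rhom_comp[OF _ rhom_ev]]) (auto simp: ev_mc ev_var)


lemma rhom_const_poly: "rhom (\<lambda>a::'a::comm_ring_1. [:a:])"
  by (rule rhomI) simp_all

lemma rhom_map_poly: "rhom f \<Longrightarrow> rhom (map_poly f)"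
  apply (rule rhomI)
     apply (simp)
    apply (simp add: rhom_1)
   apply (rule poly_eqI; simp add: coeff_map_poly rhom_0 rhom_add)
  apply (rule poly_eqI; simp add: coeff_map_poly coeff_mult rhom_0 rhom_sum rhom_mult)
  done

lemma rhom_poly_eval: "rhom (\<lambda>p. poly p x)"
  by (rule rhomI) (simp_all add: poly_mult)

lemma pCons_as: "pCons a p = [:a:] + [:0, 1:] * (p::'a::comm_ring_1 poly)"
  by (simp add: mult_pCons_left)

lemma poly_hom_ext:
  assumes h: "rhom \<phi>"
  shows "\<phi> P = poly (map_poly (\<lambda>r. \<phi> [:r:]) P) (\<phi> [:0, 1:])"
proof (induction P)
  case 0 thus ?case by (simp add: rhom_0[OF h])
next
  case (pCons a P)
  have e: "pCons a P = [:a:] + [:0,1:] * P" by (rule pCons_as)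
  have "\<phi> (pCons a P) = \<phi> [:a:] + \<phi> [:0,1:] * \<phi> P"
    by (subst e) (simp only: rhom_add[OF h] rhom_mult[OF h])
  also have "\<dots> = poly (map_poly (\<lambda>r. \<phi> [:r:]) (pCons a P)) (\<phi> [:0, 1:])"
    using pCons.IH by (auto simp: map_poly_pCons rhom_0[OF h])
  finally show ?case .
qed

lemma poly_hom_eq:
  assumes "rhom \<phi>" "rhom \<psi>" "\<And>r. \<phi> [:r:] = \<psi> [:r:]" "\<phi> [:0,1:] = \<psi> [:0,1:]"
  shows "\<phi> P = \<psi> P"
  using poly_hom_ext[OF assms(1), of P] poly_hom_ext[OF assms(2), of P] assms(3,4) by simp

locale riso =
  fixes \<phi> :: "'a::idom \<Rightarrow> 'b::idom" and \<psi> :: "'b \<Rightarrow> 'a"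
  assumes hom1: "rhom \<phi>" and hom2: "rhom \<psi>" and inv1: "\<And>x. \<psi> (\<phi> x) = x" and inv2: "\<And>y. \<phi> (\<psi> y) = y"
begin
lemma dvd_iff: "\<phi> x dvd \<phi> y \<longleftrightarrow> x dvd y"
  using rhom_dvd[OF hom1] rhom_dvd[OF hom2] inv1 by metis
lemma unit_iff: "\<phi> x dvd 1 \<longleftrightarrow> x dvd 1"
  using dvd_iff[of x 1] rhom_1[OF hom1] by simp
lemma eq0_iff: "\<phi> x = 0 \<longleftrightarrow> x = 0"
  using inv1 rhom_0[OF hom1] rhom_0[OF hom2] by metis
lemma irreducible_iff: "irreducible (\<phi> x) \<longleftrightarrow> irreducible x"
proof
  assume i: "irreducible (\<phi> x)"
  show "irreducible x"
  proof (rule irreducibleI)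
    show "x \<noteq> 0" using i eq0_iff[of x] by (auto simp: irreducible_def)
    show "\<not> x dvd 1" using i unit_iff[of x] by (auto simp: irreducible_def)
    fix a b assume "x = a * b"
    hence "\<phi> x = \<phi> a * \<phi> b" by (simp add: rhom_mult[OF hom1])
    thus "a dvd 1 \<or> b dvd 1" using i unit_iff by (auto dest: irreducibleD)
  qed
next
  assume i: "irreducible x"
  show "irreducible (\<phi> x)"
  proof (rule irreducibleI)
    show "\<phi> x \<noteq> 0" using i eq0_iff[of x] by (auto simp: irreducible_def)
    show "\<not> \<phi> x dvd 1" using i unit_iff[of x] by (auto simp: irreducible_def)
    fix a b assume "\<phi> x = a * b"
    hence "x = \<psi> a * \<psi> b" by (metis inv1 rhom_mult[OF hom2])
    hence "\<psi> a dvd 1 \<or> \<psi> b dvd 1" using i by (auto dest: irreducibleD)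
    thus "a dvd 1 \<or> b dvd 1" using unit_iff inv2 by metis
  qed
qed
end

section \<open>Splitting off the variable 0\<close>

definition Psi :: "'a::comm_ring_1 mpoly \<Rightarrow> 'a mpoly poly" where
  "Psi = ev (\<lambda>a. [:mc a:]) (\<lambda>i. if i = 0 then [:0, 1:] else [:mp_var (i - 1):])"

definition sh :: "'a::comm_ring_1 mpoly \<Rightarrow> 'a mpoly" where
  "sh = ev mc (\<lambda>i. mp_var (Suc i))"

definition Phi :: "'a::comm_ring_1 mpoly poly \<Rightarrow> 'a mpoly" where
  "Phi P = poly (map_poly sh P) (mp_var 0)"

lemma rhom_cmc: "rhom (\<lambda>a. [:mc a:])"
  using rhom_comp[OF rhom_const_poly rhom_mc] .

lemma rhom_Psi: "rhom Psi"
  unfolding Psi_def by (rule rhom_ev[OF rhom_cmc])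

lemma rhom_sh: "rhom sh"
  unfolding sh_def by (rule rhom_ev[OF rhom_mc])

lemma rhom_Phi: "rhom Phi"
  unfolding Phi_def[abs_def] by (rule rhom_comp[OF rhom_poly_eval rhom_map_poly[OF rhom_sh]])

lemma Psi_mc [simp]: "Psi (mc a) = [:mc a:]"
  by (simp add: Psi_def ev_mc[OF rhom_cmc])
lemma Psi_var [simp]: "Psi (mp_var i) = (if i = 0 then [:0, 1:] else [:mp_var (i - 1):])"
  by (simp add: Psi_def ev_var[OF rhom_cmc])
lemma sh_mc [simp]: "sh (mc a) = mc a"
  by (simp add: sh_def ev_mc[OF rhom_mc])
lemma sh_var [simp]: "sh (mp_var i) = mp_var (Suc i)"
  by (simp add: sh_def ev_var[OF rhom_mc])
lemma Phi_const [simp]: "Phi [:r:] = sh r"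
  by (simp add: Phi_def map_poly_pCons rhom_0[OF rhom_sh])
lemma Phi_X [simp]: "Phi [:0, 1:] = mp_var 0"
  by (simp add: Phi_def map_poly_pCons rhom_0[OF rhom_sh] rhom_1[OF rhom_sh])

lemma Phi_Psi [simp]: "Phi (Psi f) = f"
  by (rule hom_eq[OF rhom_comp[OF rhom_Phi rhom_Psi] rhom_id]) auto

lemma Psi_sh: "Psi (sh r) = [:r:]"
  by (rule hom_eq[OF rhom_comp[OF rhom_Psi rhom_sh] rhom_const_poly]) auto

lemma Psi_Phi [simp]: "Psi (Phi P) = P"
  by (rule poly_hom_eq[OF rhom_comp[OF rhom_Psi rhom_Phi] rhom_id]) (auto simp: Psi_sh)

interpretation Psi_iso: riso Psi Phi
  by unfold_locales (simp_all add: rhom_Psi rhom_Phi)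

section \<open>Subrings of polynomials in the first N variables\<close>

definition Zn :: "nat \<Rightarrow> 'a::comm_ring_1 mpoly \<Rightarrow> 'a mpoly" where
  "Zn N = ev mc (\<lambda>i. if i < N then mp_var i else 0)"

definition inR :: "nat \<Rightarrow> 'a::comm_ring_1 mpoly \<Rightarrow> bool" where
  "inR N f \<longleftrightarrow> Zn N f = f"

lemma rhom_Zn: "rhom (Zn N)"
  unfolding Zn_def by (rule rhom_ev[OF rhom_mc])
lemma Zn_mc [simp]: "Zn N (mc a) = mc a"
  by (simp add: Zn_def ev_mc[OF rhom_mc])
lemma Zn_var [simp]: "Zn N (mp_var i) = (if i < N then mp_var i else 0)"
  by (simp add: Zn_def ev_var[OF rhom_mc])

lemma Zn_Zn [simp]: "Zn N (Zn N f) = Zn N f"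
  by (rule hom_eq[OF rhom_comp[OF rhom_Zn rhom_Zn] rhom_Zn]) (auto simp: rhom_0[OF rhom_Zn])

lemma inR_Zn: "inR N (Zn N f)" by (simp add: inR_def)

lemma inR_mult: "inR N f \<Longrightarrow> inR N g \<Longrightarrow> inR N (f * g)"
  by (simp add: inR_def rhom_mult[OF rhom_Zn])
lemma inR_add: "inR N f \<Longrightarrow> inR N g \<Longrightarrow> inR N (f + g)"
  by (simp add: inR_def rhom_add[OF rhom_Zn])
lemma inR_diff: "inR N f \<Longrightarrow> inR N g \<Longrightarrow> inR N (f - g)"
  by (simp add: inR_def rhom_diff[OF rhom_Zn])
lemma inR_mc: "inR N (mc a)" by (simp add: inR_def)
lemma inR_0: "inR N 0" by (simp add: inR_def rhom_0[OF rhom_Zn])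
lemma inR_1: "inR N 1" by (simp add: inR_def rhom_1[OF rhom_Zn])

lemma Psi_Zn: "map_poly (Zn N) (Psi f) = Psi (Zn (Suc N) f)"
  by (rule hom_eq[OF rhom_comp[OF rhom_map_poly[OF rhom_Zn] rhom_Psi] rhom_comp[OF rhom_Psi rhom_Zn]])
     (auto simp: rhom_0[OF rhom_Zn] rhom_1[OF rhom_Zn] rhom_0[OF rhom_Psi] map_poly_pCons)

definition inRP :: "nat \<Rightarrow> 'a::comm_ring_1 mpoly poly \<Rightarrow> bool" where
  "inRP N P \<longleftrightarrow> (\<forall>k. inR N (coeff P k))"

lemma inRP_map: "inRP N P \<longleftrightarrow> map_poly (Zn N) P = P"
  by (auto simp: inRP_def inR_def poly_eq_iff coeff_map_poly rhom_0[OF rhom_Zn])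

lemma inR_Suc_iff: "inR (Suc N) f \<longleftrightarrow> inRP N (Psi f)"
proof
  assume "inR (Suc N) f"
  thus "inRP N (Psi f)" by (simp add: inRP_map Psi_Zn inR_def)
next
  assume "inRP N (Psi f)"
  hence "Psi (Zn (Suc N) f) = Psi f" by (simp add: inRP_map Psi_Zn)
  hence "Phi (Psi (Zn (Suc N) f)) = Phi (Psi f)" by simp
  thus "inR (Suc N) f" by (simp add: inR_def)
qed

lemma inRP_Phi: "inRP N P \<Longrightarrow> inR (Suc N) (Phi P)"
  by (simp add: inR_Suc_iff)

lemma inRP_mult: "inRP N P \<Longrightarrow> inRP N Q \<Longrightarrow> inRP N (P * Q)"
  by (simp add: inRP_map rhom_mult[OF rhom_map_poly[OF rhom_Zn]])
lemma inRP_add: "inRP N P \<Longrightarrow> inRP N Q \<Longrightarrow> inRP N (P + Q)"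
  by (simp add: inRP_map rhom_add[OF rhom_map_poly[OF rhom_Zn]])
lemma inRP_const: "inRP N [:c:] \<longleftrightarrow> inR N c"
  by (auto simp: inRP_def inR_def coeff_pCons rhom_0[OF rhom_Zn] split: nat.split)
lemma inRP_smult: "inR N c \<Longrightarrow> inRP N P \<Longrightarrow> inRP N (smult c P)"
  by (auto simp: inRP_def inR_def rhom_mult[OF rhom_Zn])

section \<open>Degree in the variables beyond N\<close>

definition Hd :: "nat \<Rightarrow> 'a::comm_ring_1 mpoly \<Rightarrow> 'a mpoly poly" where
  "Hd N = ev (\<lambda>a. [:mc a:]) (\<lambda>i. if i < N then [:mp_var i:] else [:0, mp_var i:])"

lemma rhom_Hd: "rhom (Hd N)"
  unfolding Hd_def by (rule rhom_ev[OF rhom_cmc])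
lemma Hd_mc [simp]: "Hd N (mc a) = [:mc a:]"
  by (simp add: Hd_def ev_mc[OF rhom_cmc])
lemma Hd_var [simp]: "Hd N (mp_var i) = (if i < N then [:mp_var i:] else [:0, mp_var i:])"
  by (simp add: Hd_def ev_var[OF rhom_cmc])

lemma Hd_at1: "poly (Hd N f) 1 = f"
  by (rule hom_eq[OF rhom_comp[OF rhom_poly_eval rhom_Hd] rhom_id]) auto
lemma Hd_at0: "poly (Hd N f) 0 = Zn N f"
  by (rule hom_eq[OF rhom_comp[OF rhom_poly_eval rhom_Hd] rhom_Zn]) auto
lemma Hd_Zn: "Hd N (Zn N f) = [:Zn N f:]"
  by (rule hom_eq[OF rhom_comp[OF rhom_Hd rhom_Zn] rhom_comp[OF rhom_const_poly rhom_Zn]])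
     (auto simp: rhom_0[OF rhom_Hd])

lemma Hd_eq0: "Hd N f = 0 \<longleftrightarrow> f = 0"
  using Hd_at1[of N f] by (auto simp: rhom_0[OF rhom_Hd])

lemma inR_iff_deg: "inR N f \<longleftrightarrow> degree (Hd N f) = 0"
proof
  assume "inR N f"
  hence "Hd N f = [:f:]" using Hd_Zn[of N f] by (simp add: inR_def)
  thus "degree (Hd N f) = 0" by simp
next
  assume "degree (Hd N f) = 0"
  then obtain c where "Hd N f = [:c:]" by (metis degree_eq_zeroE)
  thus "inR N f" using Hd_at1[of N f] Hd_at0[of N f] by (simp add: inR_def)
qed

lemma inR_factor:
  fixes f g h :: "'a::idom mpoly"
  assumes "inR N f" "f = g * h" "f \<noteq> 0"
  shows "inR N g"
proof -
  have "Hd N f = Hd N g * Hd N h" using assms(2) by (simp add: rhom_mult[OF rhom_Hd])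
  moreover have "Hd N g \<noteq> 0" "Hd N h \<noteq> 0" using assms(2,3) Hd_eq0 by auto
  ultimately have "degree (Hd N f) = degree (Hd N g) + degree (Hd N h)" by (simp add: degree_mult_eq)
  moreover have "degree (Hd N f) = 0" using assms(1) inR_iff_deg by blast
  ultimately have "degree (Hd N g) = 0" by simp
  thus ?thesis using inR_iff_deg by blast
qed

lemma Zn0_eq: "Zn 0 f = mc (Poly_Mapping.lookup f 0)"
proof -
  have mon0: "mon m (\<lambda>i. (0::'a mpoly)) = (if m = 0 then 1 else 0)" for m
  proof (cases "m = 0")
    case False
    then obtain i where "i \<in> Poly_Mapping.keys m" by (metis ex_in_conv keys_eq_empty)
    hence "Poly_Mapping.lookup m i > 0" by (simp add: in_keys_iff)
    hence "(0::'a mpoly) ^ Poly_Mapping.lookup m i = 0" by (simp add: power_0_left)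
    thus ?thesis unfolding mon_def using \<open>i \<in> Poly_Mapping.keys m\<close> False
      by (simp add: prod_zero[OF _ bexI[of _ i]])
  qed simp
  have "Zn 0 f = (\<Sum>m\<in>Poly_Mapping.keys f. if m = 0 then mc (Poly_Mapping.lookup f m) else 0)"
    unfolding Zn_def ev_def by (intro sum.cong) (auto simp: mon0)
  also have "\<dots> = mc (Poly_Mapping.lookup f 0)"
    by (auto simp: sum.delta in_keys_iff mc_def)
  finally show ?thesis .
qed

definition mu :: "'a::comm_ring_1 mpoly \<Rightarrow> nat" where "mu f = degree (Hd 0 f)"

lemma mu_mult: "f \<noteq> 0 \<Longrightarrow> g \<noteq> 0 \<Longrightarrow> mu (f * g) = mu f + mu (g::'a::idom mpoly)"
proof -
  assume "f \<noteq> 0" "g \<noteq> 0"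
  hence "Hd 0 f \<noteq> 0" "Hd 0 g \<noteq> 0" using Hd_eq0 by auto
  thus ?thesis unfolding mu_def by (simp add: rhom_mult[OF rhom_Hd] degree_mult_eq)
qed

lemma mc_unit: "c \<noteq> 0 \<Longrightarrow> mc (c::'a::field) dvd 1"
  by (metis rhom_mult[OF rhom_mc] rhom_1[OF rhom_mc] right_inverse dvdI)

lemma mc_inj: "mc a = mc b \<longleftrightarrow> a = b"
  by (metis mc_def lookup_single_eq)

lemma mc_eq0: "mc a = 0 \<longleftrightarrow> a = 0"
  by (metis mc_def lookup_single_eq single_zero)

lemma unit_iff_mu: "(f::'a::field mpoly) dvd 1 \<longleftrightarrow> f \<noteq> 0 \<and> mu f = 0"
proof
  assume "f dvd 1"
  then obtain g where fg: "1 = f * g" by (auto elim: dvdE)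
  hence nz: "f \<noteq> 0" "g \<noteq> 0" by (metis mult_zero_left zero_neq_one, metis mult_zero_right zero_neq_one)
  have "mu (f * g) = mu f + mu g" by (rule mu_mult[OF nz])
  hence "mu (1::'a mpoly) = mu f + mu g" by (simp only: fg[symmetric])
  moreover have "mu (1::'a mpoly) = 0" unfolding mu_def by (simp only: rhom_1[OF rhom_Hd] degree_1)
  ultimately show "f \<noteq> 0 \<and> mu f = 0" using nz by simp
next
  assume a: "f \<noteq> 0 \<and> mu f = 0"
  hence "inR 0 f" using inR_iff_deg[of 0 f] unfolding mu_def by simp
  hence eq: "f = mc (Poly_Mapping.lookup f 0)" by (metis inR_def Zn0_eq)
  hence "Poly_Mapping.lookup f 0 \<noteq> 0" using a mc_eq0 by metis
  thus "f dvd 1" using mc_unit eq by metis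
qed

lemma inR0_unit: "inR 0 f \<Longrightarrow> f \<noteq> 0 \<Longrightarrow> (f::'a::field mpoly) dvd 1"
proof -
  assume "inR 0 f" "f \<noteq> 0"
  hence "mu f = 0" using inR_iff_deg[of 0 f] unfolding mu_def by simp
  thus ?thesis using unit_iff_mu \<open>f \<noteq> 0\<close> by blast
qed

lemma Zn_id:
  assumes "\<And>m i. m \<in> Poly_Mapping.keys f \<Longrightarrow> i \<in> Poly_Mapping.keys m \<Longrightarrow> i < N"
  shows "Zn N f = f"
proof -
  have "Zn N f = ev mc mp_var f"
    unfolding Zn_def ev_def mon_def using assms by (intro sum.cong refl arg_cong2[where f="(*)"] prod.cong) auto
  thus ?thesis by (simp add: ev_mc_var)
qed

lemma ex_inR: "\<exists>N. inR N f"
proof -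
  let ?V = "\<Union>m\<in>Poly_Mapping.keys f. Poly_Mapping.keys m"
  have "finite ?V" by simp
  then obtain N where "\<forall>i\<in>?V. i < N" by (metis finite_nat_set_iff_bounded)
  thus ?thesis unfolding inR_def using Zn_id by blast
qed

lemma inR_mono: "inR N f \<Longrightarrow> N \<le> M \<Longrightarrow> inR M f"
proof -
  assume a: "inR N f" "N \<le> M"
  have "Zn M (Zn N f) = Zn N f"
    by (rule hom_eq[OF rhom_comp[OF rhom_Zn rhom_Zn] rhom_Zn]) (use a(2) in \<open>auto simp: rhom_0[OF rhom_Zn]\<close>)
  thus ?thesis using a(1) by (simp add: inR_def)
qed

section \<open>Nonvanishing points over an infinite field\<close>

lemma mp_eval_rhom: "rhom (\<lambda>f. mp_eval f x)"
  unfolding mp_eval_ev by (rule rhom_ev[OF rhom_id])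
lemma mp_eval_mc [simp]: "mp_eval (mc a) (x :: nat \<Rightarrow> 'a::comm_ring_1) = a"
  by (simp add: mp_eval_ev ev_mc[OF rhom_id])
lemma mp_eval_var [simp]: "mp_eval (mp_var i) (x :: nat \<Rightarrow> 'a::comm_ring_1) = x i"
  by (simp add: mp_eval_ev ev_var[OF rhom_id])

lemma nonroot_exists:
  fixes f :: "'a::field mpoly"
  assumes inf: "infinite (UNIV :: 'a set)" and f: "f \<noteq> 0"
  shows "\<exists>\<xi>. mp_eval f \<xi> \<noteq> 0"
proof -
  obtain N where "inR N f" using ex_inR by blast
  have "\<forall>f::'a mpoly. inR N f \<longrightarrow> f \<noteq> 0 \<longrightarrow> (\<exists>\<xi>. mp_eval f \<xi> \<noteq> 0)"
  proof (induction N)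
    case 0
    show ?case
    proof (intro allI impI)
      fix f :: "'a mpoly" assume "inR 0 f" "f \<noteq> 0"
      hence "f = mc (Poly_Mapping.lookup f 0)" by (metis inR_def Zn0_eq)
      thus "\<exists>\<xi>. mp_eval f \<xi> \<noteq> 0" using \<open>f \<noteq> 0\<close> by (metis mp_eval_mc mc_eq0)
    qed
  next
    case (Suc N)
    show ?case
    proof (intro allI impI)
      fix f :: "'a mpoly" assume fR: "inR (Suc N) f" and f0: "f \<noteq> 0"
      let ?P = "Psi f"
      have "?P \<noteq> 0" using f0 Psi_iso.eq0_iff by auto
      then obtain k where k: "coeff ?P k \<noteq> 0" by (metis leading_coeff_0_iff)
      have "inR N (coeff ?P k)" using fR inR_Suc_iff inRP_def by blast
      with Suc.IH k obtain \<xi> where \<xi>: "mp_eval (coeff ?P k) \<xi> \<noteq> 0" by blast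
      let ?Q = "map_poly (\<lambda>r. mp_eval r \<xi>) ?P"
      have "coeff ?Q k \<noteq> 0" using \<xi> by (simp add: coeff_map_poly rhom_0[OF mp_eval_rhom])
      hence "?Q \<noteq> 0" by auto
      hence "finite {x. poly ?Q x = 0}" by (rule poly_roots_finite)
      then obtain s where s: "poly ?Q s \<noteq> 0" using inf
        by (metis (mono_tags, lifting) UNIV_eq_I mem_Collect_eq)
      define \<xi>' where "\<xi>' i = (if i = 0 then s else \<xi> (i - 1))" for i
      have "mp_eval f \<xi>' = poly (map_poly (\<lambda>r. mp_eval r \<xi>) (Psi f)) s"
        by (rule hom_eq[OF mp_eval_rhom rhom_comp[OF rhom_comp[OF rhom_poly_eval rhom_map_poly[OF mp_eval_rhom]] rhom_Psi]])
           (auto simp: \<xi>'_def map_poly_pCons rhom_0[OF mp_eval_rhom] rhom_1[OF mp_eval_rhom])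
      hence "mp_eval f \<xi>' \<noteq> 0" using s by simp
      thus "\<exists>\<xi>. mp_eval f \<xi> \<noteq> 0" by blast
    qed
  qed
  thus ?thesis using \<open>inR N f\<close> f by blast
qed

section \<open>Specialising the variables beyond N\<close>

definition theta :: "nat \<Rightarrow> (nat \<Rightarrow> 'a) \<Rightarrow> 'a::comm_ring_1 mpoly \<Rightarrow> 'a mpoly" where
  "theta N \<xi> = ev mc (\<lambda>i. if i < N then mp_var i else mc (\<xi> i))"

lemma rhom_theta: "rhom (theta N \<xi>)"
  unfolding theta_def by (rule rhom_ev[OF rhom_mc])
lemma theta_mc [simp]: "theta N \<xi> (mc a) = mc a"
  by (simp add: theta_def ev_mc[OF rhom_mc])
lemma theta_var [simp]: "theta N \<xi> (mp_var i) = (if i < N then mp_var i else mc (\<xi> i))"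
  by (simp add: theta_def ev_var[OF rhom_mc])

lemma theta_fix: "inR N f \<Longrightarrow> theta N \<xi> f = f"
proof -
  assume "inR N f"
  have "theta N \<xi> (Zn N f) = Zn N f"
    by (rule hom_eq[OF rhom_comp[OF rhom_theta rhom_Zn] rhom_Zn]) (auto simp: rhom_0[OF rhom_theta])
  thus ?thesis using \<open>inR N f\<close> by (simp add: inR_def)
qed

lemma theta_inR: "inR N (theta N \<xi> f)"
proof -
  have "Zn N (theta N \<xi> f) = theta N \<xi> f"
    by (rule hom_eq[OF rhom_comp[OF rhom_Zn rhom_theta] rhom_theta]) auto
  thus ?thesis by (simp add: inR_def)
qed

lemma theta_eval: "mp_eval (theta N \<xi> f) \<xi> = mp_eval f \<xi>"
  by (rule hom_eq[OF rhom_comp[OF mp_eval_rhom rhom_theta] mp_eval_rhom]) auto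

lemma specialise:
  fixes c :: "'a::field mpoly"
  assumes "infinite (UNIV :: 'a set)" "c \<noteq> 0"
  shows "\<exists>\<theta>. rhom \<theta> \<and> (\<forall>f. inR N f \<longrightarrow> \<theta> f = f) \<and> (\<forall>f. inR N (\<theta> f)) \<and> \<theta> c \<noteq> 0"
proof -
  obtain \<xi> where "mp_eval c \<xi> \<noteq> 0" using nonroot_exists[OF assms] by blast
  hence "theta N \<xi> c \<noteq> 0" using theta_eval[of N \<xi> c] by (auto simp: rhom_0[OF mp_eval_rhom])
  thus ?thesis using rhom_theta theta_fix theta_inR by blast
qed


lemma quot_inR:
  fixes a b q :: "'a::idom mpoly"
  assumes "inR N a" "inR N b" "b \<noteq> 0" "a = b * q"
  shows "inR N q"
proof -
  have "b * q = a" by (simp add: assms(4))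
  also have "a = Zn N a" using assms(1) by (simp add: inR_def)
  also have "\<dots> = Zn N b * Zn N q" using assms(4) by (simp add: rhom_mult[OF rhom_Zn])
  also have "\<dots> = b * Zn N q" using assms(2) by (simp add: inR_def)
  finally have "q = Zn N q" using mult_left_cancel[OF assms(3)] by blast
  thus ?thesis by (simp add: inR_def)
qed

lemma quot_inRP:
  fixes c :: "'a::idom mpoly"
  assumes "inRP N X" "inR N c" "c \<noteq> 0" "X = smult c X1"
  shows "inRP N X1"
  unfolding inRP_def
proof
  fix k
  have "coeff X k = c * coeff X1 k" using assms(4) by simp
  thus "inR N (coeff X1 k)" using assms(1,2,3) quot_inR inRP_def by metis
qed

lemma irr_factor:
  fixes c :: "'a::field mpoly"
  shows "inR N c \<Longrightarrow> c \<noteq> 0 \<Longrightarrow> \<not> c dvd 1 \<Longrightarrow> \<exists>\<pi> c'. irreducible \<pi> \<and> inR N \<pi> \<and> inR N c' \<and> c = \<pi> * c'"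
proof (induction "mu c" arbitrary: c rule: less_induct)
  case less
  show ?case
  proof (cases "irreducible c")
    case True thus ?thesis by (intro exI[of _ c] exI[of _ 1] conjI True less.prems(1) inR_1) simp
  next
    case False
    have "\<exists>a b. c = a * b \<and> \<not> a dvd 1 \<and> \<not> b dvd 1"
    proof (rule ccontr)
      assume na: "\<not> (\<exists>a b. c = a * b \<and> \<not> a dvd 1 \<and> \<not> b dvd 1)"
      have "irreducible c"
      proof (rule irreducibleI)
        show "c \<noteq> 0" "\<not> c dvd 1" using less.prems(2,3) by blast+
        show "a dvd 1 \<or> b dvd 1" if "c = a * b" for a b using na that by blast
      qed
      thus False using False by blast
    qed
    then obtain a b where ab: "c = a * b" "\<not> a dvd 1" "\<not> b dvd 1" by blast
    have nz: "a \<noteq> 0" "b \<noteq> 0" using less.prems(2) ab(1) by auto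
    have "mu b \<noteq> 0" using unit_iff_mu[of b] ab(3) nz(2) by simp
    hence ml: "mu a < mu c" using mu_mult[OF nz] ab by simp
    have aR: "inR N a" using inR_factor less.prems(1,2) ab(1) by blast
    obtain \<pi> a' where \<pi>: "irreducible \<pi>" "inR N \<pi>" "inR N a'" "a = \<pi> * a'"
      using less.hyps[OF ml aR nz(1) ab(2)] by blast
    have "c = \<pi> * (a' * b)" using \<pi> ab by (simp add: mult.assoc)
    moreover have "\<pi> \<noteq> 0" using \<pi> by auto
    ultimately have "inR N (a' * b)" using quot_inR[OF less.prems(1) \<pi>(2)] by blast
    thus ?thesis using \<open>c = \<pi> * (a' * b)\<close> \<pi> by blast
  qed
qed


context
  fixes N :: nat
  assumes SN: "\<And>p a b :: 'a::field mpoly. inR N p \<Longrightarrow> inR N a \<Longrightarrow> inR N b \<Longrightarrow> irreducible p \<Longrightarrow>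
                 p dvd a * b \<Longrightarrow> p dvd a \<or> p dvd b"
begin

lemma content_prime:
  fixes \<pi> :: "'a mpoly"
  assumes \<pi>: "inR N \<pi>" "irreducible \<pi>" and X: "inRP N X" and Y: "inRP N Y" and d: "[:\<pi>:] dvd X * Y"
  shows "[:\<pi>:] dvd X \<or> [:\<pi>:] dvd Y"
proof (rule ccontr)
  assume "\<not> ?thesis"
  hence "\<not> [:\<pi>:] dvd X" "\<not> [:\<pi>:] dvd Y" by blast+
  hence nX: "\<exists>i. \<not> \<pi> dvd coeff X i" and nY: "\<exists>j. \<not> \<pi> dvd coeff Y j" by (simp_all only: const_poly_dvd_iff not_all)
  define i where "i = (LEAST i. \<not> \<pi> dvd coeff X i)"
  define j where "j = (LEAST j. \<not> \<pi> dvd coeff Y j)"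
  have i1: "\<not> \<pi> dvd coeff X i" using nX unfolding i_def by (rule LeastI_ex)
  have i2: "\<pi> dvd coeff X k" if "k < i" for k
    using not_less_Least[of k "\<lambda>i. \<not> \<pi> dvd coeff X i"] that unfolding i_def by blast
  have j1: "\<not> \<pi> dvd coeff Y j" using nY unfolding j_def by (rule LeastI_ex)
  have j2: "\<pi> dvd coeff Y k" if "k < j" for k
    using not_less_Least[of k "\<lambda>i. \<not> \<pi> dvd coeff Y i"] that unfolding j_def by blast
  have "\<forall>n. \<pi> dvd coeff (X * Y) n" using d by (simp add: const_poly_dvd_iff)
  hence "\<pi> dvd coeff (X * Y) (i + j)" by blast
  also have "coeff (X * Y) (i + j) = (\<Sum>k\<le>i+j. coeff X k * coeff Y (i + j - k))" by (rule coeff_mult)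
  also have "\<dots> = coeff X i * coeff Y j + (\<Sum>k\<in>{..i+j}-{i}. coeff X k * coeff Y (i + j - k))"
    by (simp add: sum.remove[of "{..i+j}" i])
  finally have h: "\<pi> dvd coeff X i * coeff Y j + (\<Sum>k\<in>{..i+j}-{i}. coeff X k * coeff Y (i + j - k))" .
  have "\<pi> dvd (\<Sum>k\<in>{..i+j}-{i}. coeff X k * coeff Y (i + j - k))"
  proof (rule dvd_sum)
    fix k assume k: "k \<in> {..i+j}-{i}"
    show "\<pi> dvd coeff X k * coeff Y (i + j - k)"
    proof (cases "k < i")
      case True thus ?thesis using i2 by (simp add: dvd_mult2)
    next
      case False with k have "i + j - k < j" by auto
      thus ?thesis using j2 by (simp add: dvd_mult)
    qed
  qed
  hence "\<pi> dvd coeff X i * coeff Y j" using h by (simp add: dvd_add_left_iff)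
  moreover have "inR N (coeff X i)" "inR N (coeff Y j)" using X Y by (simp_all add: inRP_def)
  ultimately have "\<pi> dvd coeff X i \<or> \<pi> dvd coeff Y j" using SN[OF \<pi>(1) _ _ \<pi>(2)] by blast
  thus False using i1 j1 by blast
qed

lemma cancel_const:
  fixes c :: "'a mpoly"
  shows "inR N c \<Longrightarrow> c \<noteq> 0 \<Longrightarrow> inRP N X \<Longrightarrow> inRP N Y \<Longrightarrow> [:c:] dvd X * Y \<Longrightarrow>
    \<exists>c1 c2 X' Y'. c = c1 * c2 \<and> X = smult c1 X' \<and> Y = smult c2 Y' \<and> inRP N X' \<and> inRP N Y'"
proof (induction "mu c" arbitrary: c X Y rule: less_induct)
  case less
  show ?case
  proof (cases "c dvd 1")
    case True
    have "mu c = 0" using True unit_iff_mu[of c] by simp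
    hence "inR 0 c" using inR_iff_deg[of 0 c] unfolding mu_def by simp
    define a where "a = Poly_Mapping.lookup c 0"
    have ceq: "c = mc a" using \<open>inR 0 c\<close> unfolding a_def by (metis inR_def Zn0_eq)
    have a0: "a \<noteq> 0" using less.prems(2) ceq mc_eq0 by blast
    define X' where "X' = smult (mc (inverse a)) X"
    have "c * mc (inverse a) = mc (a * inverse a)" by (simp add: ceq rhom_mult[OF rhom_mc])
    also have "\<dots> = 1" using a0 by (simp add: rhom_1[OF rhom_mc])
    finally have "c * mc (inverse a) = 1" .
    hence "X = smult c X'" by (simp add: X'_def)
    moreover have "inRP N X'" unfolding X'_def by (rule inRP_smult[OF inR_mc less.prems(3)])
    ultimately show ?thesis using less.prems(4) by (intro exI[of _ c] exI[of _ 1] exI[of _ X'] exI[of _ Y]) auto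
  next
    case False
    obtain \<pi> c' where \<pi>: "irreducible \<pi>" "inR N \<pi>" "inR N c'" "c = \<pi> * c'"
      using irr_factor[OF less.prems(1,2) False] by blast
    have nz: "\<pi> \<noteq> 0" "c' \<noteq> 0" using \<pi> less.prems(2) by auto
    have "\<not> \<pi> dvd 1" using \<pi>(1) by (simp add: irreducible_def)
    hence "mu \<pi> \<noteq> 0" using unit_iff_mu[of \<pi>] nz(1) by simp
    hence mu_less: "mu c' < mu c" using mu_mult[OF nz] \<pi> by simp
    obtain W where W: "X * Y = [:c:] * W" using less.prems(5) by (auto elim: dvdE)
    have "[:c:] = [:\<pi>:] * [:c':]" using \<pi>(4) by simp
    hence "[:\<pi>:] dvd [:c:]" by (rule dvdI)
    hence "[:\<pi>:] dvd X * Y" using less.prems(5) dvd_trans by blast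
    hence "[:\<pi>:] dvd X \<or> [:\<pi>:] dvd Y" using content_prime \<pi> less.prems(3,4) by blast
    thus ?thesis
    proof
      assume "[:\<pi>:] dvd X"
      then obtain X1 where X1: "X = smult \<pi> X1" by (auto elim: dvdE)
      have X1R: "inRP N X1" using quot_inRP less.prems(3) \<pi> nz X1 by blast
      have "smult \<pi> (X1 * Y) = smult \<pi> (smult c' W)" using W X1 \<pi> by simp
      hence "X1 * Y = smult c' W" using nz smult_cancel by blast
      hence "X1 * Y = [:c':] * W" by simp
      hence "[:c':] dvd X1 * Y" by (rule dvdI)
      then obtain c1 c2 X' Y' where r: "c' = c1 * c2" "X1 = smult c1 X'" "Y = smult c2 Y'" "inRP N X'" "inRP N Y'"
        using less.hyps[OF mu_less \<pi>(3) nz(2) X1R less.prems(4)] by blast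
      show ?thesis using r X1 \<pi> by (intro exI[of _ "\<pi> * c1"] exI[of _ c2] exI[of _ X'] exI[of _ Y']) (auto simp: mult.assoc)
    next
      assume "[:\<pi>:] dvd Y"
      then obtain Y1 where Y1: "Y = smult \<pi> Y1" by (auto elim: dvdE)
      have Y1R: "inRP N Y1" using quot_inRP less.prems(4) \<pi> nz Y1 by blast
      have "smult \<pi> (X * Y1) = smult \<pi> (smult c' W)" using W Y1 \<pi> by simp
      hence "X * Y1 = smult c' W" using nz smult_cancel by blast
      hence "X * Y1 = [:c':] * W" by simp
      hence "[:c':] dvd X * Y1" by (rule dvdI)
      then obtain c1 c2 X' Y' where r: "c' = c1 * c2" "X = smult c1 X'" "Y1 = smult c2 Y'" "inRP N X'" "inRP N Y'"
        using less.hyps[OF mu_less \<pi>(3) nz(2) less.prems(3) Y1R] by blast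
      show ?thesis using r Y1 \<pi> by (intro exI[of _ c1] exI[of _ "\<pi> * c2"] exI[of _ X'] exI[of _ Y']) (auto simp: mult_ac)
    qed
  qed
qed

end


lemma clear_denom:
  fixes U :: "'a::idom fract poly"
  shows "\<exists>c U'. c \<noteq> 0 \<and> fract_poly U' = smult (to_fract c) U"
proof (induction U)
  case 0 show ?case by (intro exI[of _ 1] exI[of _ 0]) simp
next
  case (pCons u U)
  then obtain c0 U0 where h: "c0 \<noteq> 0" "fract_poly U0 = smult (to_fract c0) U" by blast
  obtain x y where u: "u = Fract x y" "y \<noteq> 0" by (cases u)
  have uy: "to_fract y * u = to_fract x" using u by (simp add: Fract_conv_to_fract)
  let ?U' = "pCons (x * c0) (smult y U0)"
  have "fract_poly ?U' = smult (to_fract (y * c0)) (pCons u U)"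
  proof (rule poly_eqI)
    fix n show "coeff (fract_poly ?U') n = coeff (smult (to_fract (y * c0)) (pCons u U)) n"
    proof (cases n)
      case 0 thus ?thesis using uy by (simp add: coeff_map_poly mult_ac)
    next
      case (Suc m)
      have "coeff (fract_poly U0) m = to_fract c0 * coeff U m" using h(2) by simp
      thus ?thesis using Suc by (simp add: coeff_map_poly mult_ac)
    qed
  qed
  thus ?case using h(1) u(2) by (intro exI[of _ "y * c0"] exI[of _ ?U']) auto
qed

lemma degree_fract_poly: "degree (fract_poly P) = degree P"
  by (rule degree_map_poly) simp

lemma map_poly_fix:
  assumes "rhom \<theta>" "\<And>f. inR N f \<Longrightarrow> \<theta> f = f" "inRP N P"
  shows "map_poly \<theta> P = P"
  using assms by (intro poly_eqI) (simp add: coeff_map_poly rhom_0 inRP_def)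

lemma map_poly_into:
  assumes "rhom \<theta>" "\<And>f. inR N (\<theta> f)"
  shows "inRP N (map_poly \<theta> P)"
  using assms by (simp add: inRP_def coeff_map_poly rhom_0)

lemma map_poly_smult_hom:
  assumes "rhom \<theta>"
  shows "map_poly \<theta> (smult a P) = smult (\<theta> a) (map_poly \<theta> P)"
  by (rule map_poly_smult) (simp_all add: rhom_0[OF assms] rhom_mult[OF assms])

lemma nonunit_of_degree:
  fixes X :: "'a::idom poly"
  shows "degree X > 0 \<Longrightarrow> \<not> X dvd 1"
  by (auto simp: is_unit_poly_iff)

context
  fixes N :: nat
  assumes inf: "infinite (UNIV :: 'a::field set)"
  and SN: "\<And>p a b :: 'a mpoly. inR N p \<Longrightarrow> inR N a \<Longrightarrow> inR N b \<Longrightarrow> irreducible p \<Longrightarrow>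
                 p dvd a * b \<Longrightarrow> p dvd a \<or> p dvd b"
begin

lemma irr_fract:
  fixes P :: "'a mpoly poly"
  assumes PR: "inRP N P" and Pi: "irreducible P" and Pd: "degree P > 0"
  shows "irreducible (fract_poly P)"
proof (rule irreducibleI)
  show F0: "fract_poly P \<noteq> 0" using Pd by auto
  show "\<not> fract_poly P dvd 1" using Pd is_unit_iff_degree[OF F0] degree_fract_poly[of P] by simp
  fix U V assume e: "fract_poly P = U * V"
  show "U dvd 1 \<or> V dvd 1"
  proof (rule ccontr)
    assume nu: "\<not> (U dvd 1 \<or> V dvd 1)"
    have UV0: "U \<noteq> 0" "V \<noteq> 0" using e \<open>fract_poly P \<noteq> 0\<close> by auto
    have dU: "degree U > 0" using nu UV0 is_unit_iff_degree by auto
    have dV: "degree V > 0" using nu UV0 is_unit_iff_degree by auto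
    obtain c1 U' where c1: "c1 \<noteq> 0" "fract_poly U' = smult (to_fract c1) U" using clear_denom by blast
    obtain c2 V' where c2: "c2 \<noteq> 0" "fract_poly V' = smult (to_fract c2) V" using clear_denom by blast
    have "fract_poly (smult (c1 * c2) P) = fract_poly (U' * V')"
      using e c1 c2 by (simp add: mult_smult_left mult_smult_right mult_ac)
    hence e2: "smult (c1 * c2) P = U' * V'" by (simp only: fract_poly_eq_iff)
    have degU': "degree U' = degree U" using c1 degree_fract_poly[of U'] by simp
    have degV': "degree V' = degree V" using c2 degree_fract_poly[of V'] by simp
    have U'0: "U' \<noteq> 0" using degU' dU by auto
    have V'0: "V' \<noteq> 0" using degV' dV by auto
    have e0: "c1 * c2 * lead_coeff U' * lead_coeff V' \<noteq> 0" using c1 c2 U'0 V'0 by simp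
    obtain \<theta> where th: "rhom \<theta>" "\<And>f. inR N f \<Longrightarrow> \<theta> f = f" "\<And>f. inR N (\<theta> f)"
        "\<theta> (c1 * c2 * lead_coeff U' * lead_coeff V') \<noteq> 0"
      using specialise[OF inf e0, of N] by blast
    have th0: "\<theta> (c1 * c2) \<noteq> 0" "\<theta> (lead_coeff U') \<noteq> 0" "\<theta> (lead_coeff V') \<noteq> 0"
      using th(4) by (simp_all add: rhom_mult[OF th(1)])
    define U1 where "U1 = map_poly \<theta> U'"
    define V1 where "V1 = map_poly \<theta> V'"
    have "map_poly \<theta> (smult (c1 * c2) P) = map_poly \<theta> (U' * V')" using e2 by simp
    hence e3: "smult (\<theta> (c1 * c2)) P = U1 * V1"
      unfolding U1_def V1_def
      by (simp add: map_poly_smult_hom[OF th(1)] map_poly_fix[OF th(1) th(2) PR] rhom_mult[OF rhom_map_poly[OF th(1)]])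
    have dU1: "degree U1 = degree U" unfolding U1_def using th0 degU' by (simp add: map_poly_degree_eq)
    have dV1: "degree V1 = degree V" unfolding V1_def using th0 degV' by (simp add: map_poly_degree_eq)
    have U1R: "inRP N U1" "inRP N V1" unfolding U1_def V1_def using map_poly_into[OF th(1) th(3)] by auto
    have "U1 * V1 = [:\<theta> (c1 * c2):] * P" using e3 by simp
    hence dvd: "[:\<theta> (c1 * c2):] dvd U1 * V1" by (rule dvdI)
    obtain d1 d2 X' Y' where r: "\<theta> (c1 * c2) = d1 * d2" "U1 = smult d1 X'" "V1 = smult d2 Y'" "inRP N X'" "inRP N Y'"
      using cancel_const[OF SN th(3) th0(1) U1R dvd] by blast
    have d0: "d1 \<noteq> 0" "d2 \<noteq> 0" using r(1) th0(1) by auto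
    have "smult (d1 * d2) P = smult (d1 * d2) (X' * Y')" using e3 r by (simp add: mult_smult_left mult_smult_right mult.commute)
    hence PXY: "P = X' * Y'" using d0 smult_cancel[of "d1 * d2"] by simp
    have "degree X' > 0" using dU1 dU r(2) d0 by simp
    hence "\<not> X' dvd 1" by (rule nonunit_of_degree)
    moreover have "degree Y' > 0" using dV1 dV r(3) d0 by simp
    hence "\<not> Y' dvd 1" by (rule nonunit_of_degree)
    ultimately show False using irreducibleD[OF Pi PXY] by blast
  qed
qed

lemma lift_dvd:
  fixes P A :: "'a mpoly poly"
  assumes PR: "inRP N P" and AR: "inRP N A" and Pi: "irreducible P" and Pd: "degree P > 0"
    and d: "fract_poly P dvd fract_poly A"
  shows "P dvd A"
proof -
  obtain W where W: "fract_poly A = fract_poly P * W" using d by (auto elim: dvdE)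
  obtain c W' where c: "c \<noteq> 0" "fract_poly W' = smult (to_fract c) W" using clear_denom by blast
  have "fract_poly (smult c A) = fract_poly (P * W')" using W c by (simp add: mult_smult_right)
  hence e: "smult c A = P * W'" by (simp only: fract_poly_eq_iff)
  obtain \<theta> where th: "rhom \<theta>" "\<And>f. inR N f \<Longrightarrow> \<theta> f = f" "\<And>f. inR N (\<theta> f)" "\<theta> c \<noteq> 0"
    using specialise[OF inf c(1), of N] by blast
  define W1 where "W1 = map_poly \<theta> W'"
  have "map_poly \<theta> (smult c A) = map_poly \<theta> (P * W')" using e by simp
  hence e3: "smult (\<theta> c) A = P * W1"
    unfolding W1_def
    by (simp add: map_poly_smult_hom[OF th(1)] map_poly_fix[OF th(1) th(2) PR] map_poly_fix[OF th(1) th(2) AR] rhom_mult[OF rhom_map_poly[OF th(1)]])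
  have W1R: "inRP N W1" unfolding W1_def using map_poly_into[OF th(1) th(3)] by auto
  have "P * W1 = [:\<theta> c:] * A" using e3 by simp
  hence dvd: "[:\<theta> c:] dvd P * W1" by (rule dvdI)
  obtain d1 d2 X' Y' where r: "\<theta> c = d1 * d2" "P = smult d1 X'" "W1 = smult d2 Y'" "inRP N X'" "inRP N Y'"
    using cancel_const[OF SN th(3) th(4) PR W1R dvd] by blast
  have d0: "d1 \<noteq> 0" "d2 \<noteq> 0" using r(1) th(4) by auto
  have "degree X' > 0" using Pd r(2) d0 by simp
  hence nX: "\<not> X' dvd 1" by (rule nonunit_of_degree)
  have "P = [:d1:] * X'" using r(2) by simp
  hence "[:d1:] dvd 1" using irreducibleD[OF Pi] nX by blast
  hence "d1 dvd 1" by (simp add: is_unit_const_poly_iff)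
  then obtain e where de: "1 = d1 * e" by (auto elim: dvdE)
  have "smult (d1 * d2) A = smult (d1 * d2) (X' * Y')" using e3 r by (simp add: mult_smult_left mult_smult_right mult_ac)
  hence AXY: "A = X' * Y'" using smult_cancel[of "d1 * d2"] d0 by simp
  have "smult e P = smult (e * d1) X'" using r(2) by simp
  also have "\<dots> = X'" using de by (simp add: mult.commute)
  finally have sX: "smult e P = X'" .
  have "P * smult e Y' = smult e P * Y'" by (simp add: mult_smult_left mult_smult_right)
  hence "A = P * smult e Y'" using AXY sX by simp
  thus ?thesis by (rule dvdI)
qed

lemma gauss:
  fixes P A B :: "'a mpoly poly"
  assumes PR: "inRP N P" and AR: "inRP N A" and BR: "inRP N B" and Pi: "irreducible P" and Pd: "degree P > 0"
    and d: "P dvd A * B"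
  shows "P dvd A \<or> P dvd B"
proof -
  have pr: "prime_elem (fract_poly P)" by (rule field_poly_irreducible_imp_prime[OF irr_fract[OF PR Pi Pd]])
  have "fract_poly P dvd fract_poly A * fract_poly B" using fract_poly_dvd[OF d] by simp
  hence "fract_poly P dvd fract_poly A \<or> fract_poly P dvd fract_poly B" using pr prime_elem_dvd_mult_iff by blast
  thus ?thesis using lift_dvd[OF PR AR Pi Pd] lift_dvd[OF PR BR Pi Pd] by blast
qed

lemma SN_step:
  fixes p a b :: "'a mpoly"
  assumes pR: "inR (Suc N) p" and aR: "inR (Suc N) a" and bR: "inR (Suc N) b"
    and pi: "irreducible p" and d: "p dvd a * b"
  shows "p dvd a \<or> p dvd b"
proof -
  have PR: "inRP N (Psi p)" "inRP N (Psi a)" "inRP N (Psi b)" using pR aR bR inR_Suc_iff by blast+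
  have Pi: "irreducible (Psi p)" using pi Psi_iso.irreducible_iff by blast
  have Pd: "Psi p dvd Psi a * Psi b" using rhom_dvd[OF rhom_Psi d] by (simp add: rhom_mult[OF rhom_Psi])
  have "Psi p dvd Psi a \<or> Psi p dvd Psi b"
  proof (cases "degree (Psi p) = 0")
    case True
    then obtain \<pi> where \<pi>: "Psi p = [:\<pi>:]" by (metis degree_eq_zeroE)
    have "irreducible \<pi>" using Pi \<pi> irreducible_const_poly_iff by metis
    moreover have "inR N \<pi>" using PR(1) \<pi> inRP_const by metis
    ultimately have "[:\<pi>:] dvd Psi a \<or> [:\<pi>:] dvd Psi b"
      using content_prime[OF SN \<open>inR N \<pi>\<close> \<open>irreducible \<pi>\<close> PR(2) PR(3)] Pd \<pi> by simp
    thus ?thesis using \<pi> by simp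
  next
    case False
    thus ?thesis using gauss[OF PR Pi _ Pd] by blast
  qed
  thus ?thesis using Psi_iso.dvd_iff by blast
qed

end

lemma SN_all:
  fixes p a b :: "'a::field mpoly"
  assumes inf: "infinite (UNIV :: 'a set)"
  shows "inR N p \<Longrightarrow> inR N a \<Longrightarrow> inR N b \<Longrightarrow> irreducible p \<Longrightarrow> p dvd a * b \<Longrightarrow> p dvd a \<or> p dvd b"
proof (induction N arbitrary: p a b)
  case 0
  have "p dvd 1" using inR0_unit[OF 0(1)] 0(4) by (simp add: irreducible_def)
  thus ?case using 0(4) by (simp add: irreducible_def)
next
  case (Suc N)
  show ?case by (rule SN_step[OF inf Suc.IH Suc.prems])
qed

theorem mpoly_prime:
  fixes p a b :: "'a::field mpoly"
  assumes inf: "infinite (UNIV :: 'a set)" and "irreducible p" and "p dvd a * b"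
  shows "p dvd a \<or> p dvd b"
proof -
  obtain N1 N2 N3 where "inR N1 p" "inR N2 a" "inR N3 b" using ex_inR by metis
  hence "inR (max N1 (max N2 N3)) p" "inR (max N1 (max N2 N3)) a" "inR (max N1 (max N2 N3)) b"
    using inR_mono by (metis max.cobounded1 max.cobounded2 max.coboundedI2)+
  thus ?thesis using SN_all[OF inf] assms(2,3) by blast
qed


lemma pderiv_superset:
  assumes "finite S" "Poly_Mapping.keys p \<subseteq> S"
  shows "mp_pderiv i p = (\<Sum>m\<in>S. Poly_Mapping.single (m - Poly_Mapping.single i 1)
            (of_nat (Poly_Mapping.lookup m i) * Poly_Mapping.lookup p m))"
  unfolding mp_pderiv_def using assms
  by (intro sum.mono_neutral_left) (auto simp: in_keys_iff)

lemma pderiv_add: "mp_pderiv i (p + q) = mp_pderiv i p + mp_pderiv i (q :: 'a::comm_ring_1 mpoly)"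
proof -
  let ?S = "Poly_Mapping.keys p \<union> Poly_Mapping.keys q"
  have "mp_pderiv i (p + q) = (\<Sum>m\<in>?S. Poly_Mapping.single (m - Poly_Mapping.single i 1)
            (of_nat (Poly_Mapping.lookup m i) * Poly_Mapping.lookup (p + q) m))"
    by (rule pderiv_superset) (use keys_add[of p q] in auto)
  also have "\<dots> = (\<Sum>m\<in>?S. Poly_Mapping.single (m - Poly_Mapping.single i 1)
            (of_nat (Poly_Mapping.lookup m i) * Poly_Mapping.lookup p m)
          + Poly_Mapping.single (m - Poly_Mapping.single i 1)
            (of_nat (Poly_Mapping.lookup m i) * Poly_Mapping.lookup q m))"
    by (simp add: lookup_add single_add distrib_left)
  also have "\<dots> = mp_pderiv i p + mp_pderiv i q"
    by (simp add: sum.distrib pderiv_superset[of ?S])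
  finally show ?thesis .
qed

lemma pderiv_zero: "mp_pderiv i 0 = 0"
  by (simp add: mp_pderiv_def)

lemma pderiv_sum: "mp_pderiv i (sum g A) = (\<Sum>a\<in>A. mp_pderiv i (g a :: 'a::comm_ring_1 mpoly))"
  by (induction A rule: infinite_finite_induct) (simp_all add: pderiv_zero pderiv_add)

lemma pderiv_single: "mp_pderiv i (Poly_Mapping.single m a) =
    Poly_Mapping.single (m - Poly_Mapping.single i 1) (of_nat (Poly_Mapping.lookup m i) * (a::'a::comm_ring_1))"
  by (cases "a = 0") (simp_all add: mp_pderiv_def)

lemma lookup_minus_nat: "Poly_Mapping.lookup (m - m') k = Poly_Mapping.lookup m k - Poly_Mapping.lookup m' (k::nat)"
  for m m' :: "nat \<Rightarrow>\<^sub>0 nat"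
  by transfer simp

lemma add_minus_single:
  fixes m m' :: "nat \<Rightarrow>\<^sub>0 nat"
  assumes "Poly_Mapping.lookup m' i > 0"
  shows "m + (m' - Poly_Mapping.single i 1) = (m + m') - Poly_Mapping.single i 1"
  using assms by (intro poly_mapping_eqI) (auto simp: lookup_add lookup_minus_nat lookup_single when_def)

lemma pderiv_single_mult:
  fixes a b :: "'a::comm_ring_1"
  shows "mp_pderiv i (Poly_Mapping.single m a * Poly_Mapping.single m' b) =
    Poly_Mapping.single m a * mp_pderiv i (Poly_Mapping.single m' b) + mp_pderiv i (Poly_Mapping.single m a) * Poly_Mapping.single m' b"
proof -
  let ?e = "Poly_Mapping.single i (1::nat)"
  have t1: "Poly_Mapping.single (m + (m' - ?e)) (a * (of_nat (Poly_Mapping.lookup m' i) * b))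
      = Poly_Mapping.single (m + m' - ?e) (of_nat (Poly_Mapping.lookup m' i) * (a * b))"
  proof (cases "Poly_Mapping.lookup m' i = 0")
    case False thus ?thesis using add_minus_single[of m' i m] by (simp add: mult_ac)
  qed simp
  have t2: "Poly_Mapping.single ((m - ?e) + m') (of_nat (Poly_Mapping.lookup m i) * a * b)
      = Poly_Mapping.single (m + m' - ?e) (of_nat (Poly_Mapping.lookup m i) * (a * b))"
  proof (cases "Poly_Mapping.lookup m i = 0")
    case False thus ?thesis using add_minus_single[of m i m'] by (simp add: add.commute mult_ac)
  qed simp
  have "Poly_Mapping.single m a * mp_pderiv i (Poly_Mapping.single m' b) + mp_pderiv i (Poly_Mapping.single m a) * Poly_Mapping.single m' b
     = Poly_Mapping.single (m + (m' - ?e)) (a * (of_nat (Poly_Mapping.lookup m' i) * b))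
       + Poly_Mapping.single ((m - ?e) + m') (of_nat (Poly_Mapping.lookup m i) * a * b)"
    by (simp only: pderiv_single mult_single)
  also have "\<dots> = Poly_Mapping.single (m + m' - ?e) (of_nat (Poly_Mapping.lookup (m + m') i) * (a * b))"
    by (simp only: t1 t2 single_add[symmetric]) (simp add: lookup_add algebra_simps)
  also have "\<dots> = mp_pderiv i (Poly_Mapping.single m a * Poly_Mapping.single m' b)"
    by (simp only: pderiv_single mult_single)
  finally show ?thesis by simp
qed

lemma leibniz: "mp_pderiv i (f * g) = f * mp_pderiv i g + mp_pderiv i f * (g :: 'a::comm_ring_1 mpoly)"
proof -
  let ?A = "Poly_Mapping.keys f" and ?B = "Poly_Mapping.keys g"
  let ?sf = "\<lambda>m. Poly_Mapping.single m (Poly_Mapping.lookup f m)"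
  let ?sg = "\<lambda>m. Poly_Mapping.single m (Poly_Mapping.lookup g m)"
  have ef: "f = (\<Sum>m\<in>?A. ?sf m)" by (rule pm_repr)
  have eg: "g = (\<Sum>m\<in>?B. ?sg m)" by (rule pm_repr)
  have "mp_pderiv i (f * g) = mp_pderiv i ((\<Sum>m\<in>?A. ?sf m) * (\<Sum>m\<in>?B. ?sg m))"
    using ef eg by (metis (no_types, lifting))
  also have "\<dots> = (\<Sum>m\<in>?A. \<Sum>m'\<in>?B. mp_pderiv i (?sf m * ?sg m'))"
    by (simp add: sum_product pderiv_sum)
  also have "\<dots> = (\<Sum>m\<in>?A. \<Sum>m'\<in>?B. ?sf m * mp_pderiv i (?sg m')) + (\<Sum>m\<in>?A. \<Sum>m'\<in>?B. mp_pderiv i (?sf m) * ?sg m')"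
    by (simp add: pderiv_single_mult sum.distrib)
  also have "\<dots> = (\<Sum>m\<in>?A. ?sf m) * mp_pderiv i (\<Sum>m\<in>?B. ?sg m) + mp_pderiv i (\<Sum>m\<in>?A. ?sf m) * (\<Sum>m\<in>?B. ?sg m)"
    by (simp add: sum_product pderiv_sum)
  also have "\<dots> = f * mp_pderiv i g + mp_pderiv i f * g"
    using ef eg by (metis (no_types, lifting))
  finally show ?thesis .
qed

lemma eval_pderiv_mult:
  fixes A B :: "'a::comm_ring_1 mpoly"
  shows "mp_eval (mp_pderiv i (A * B)) x = mp_eval A x * mp_eval (mp_pderiv i B) x + mp_eval (mp_pderiv i A) x * mp_eval B x"
  by (simp add: leibniz rhom_add[OF mp_eval_rhom] rhom_mult[OF mp_eval_rhom])

context
  fixes h :: "'a::comm_ring_1 \<Rightarrow> 'b::comm_ring_1"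
  assumes h: "rhom h"
begin

lemma map_ev: "Poly_Mapping.map h f = ev (\<lambda>a. mc (h a)) mp_var f"
proof (rule poly_mapping_eqI)
  fix k
  have "ev (\<lambda>a. mc (h a)) mp_var f = (\<Sum>m\<in>Poly_Mapping.keys f. Poly_Mapping.single m (h (Poly_Mapping.lookup f m)))"
    unfolding ev_def by (simp add: mon_var mc_def mult_single)
  hence "Poly_Mapping.lookup (ev (\<lambda>a. mc (h a)) mp_var f) k = (\<Sum>m\<in>Poly_Mapping.keys f. if m = k then h (Poly_Mapping.lookup f m) else 0)"
    by (simp add: lookup_sum lookup_single when_def)
  also have "\<dots> = h (Poly_Mapping.lookup f k)"
    by (simp add: sum.delta' in_keys_iff rhom_0[OF h])
  finally show "Poly_Mapping.lookup (Poly_Mapping.map h f) k = Poly_Mapping.lookup (ev (\<lambda>a. mc (h a)) mp_var f) k"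
    by (simp add: lookup_map_hom rhom_0[OF h])
qed

lemma rhom_mapc: "rhom (Poly_Mapping.map h :: 'a mpoly \<Rightarrow> 'b mpoly)"
  unfolding map_ev[abs_def] by (rule rhom_ev[OF rhom_comp[OF rhom_mc h]])

lemma map_mc: "Poly_Mapping.map h (mc a) = mc (h a)"
  by (simp add: map_ev ev_mc[OF rhom_comp[OF rhom_mc h]])

lemma map_var: "Poly_Mapping.map h (mp_var i) = mp_var i"
  by (simp add: map_ev ev_var[OF rhom_comp[OF rhom_mc h]])

lemma eval_map: "mp_eval (Poly_Mapping.map h f) (\<lambda>i. h (x i)) = h (mp_eval f x)"
  by (rule hom_eq[OF rhom_comp[OF mp_eval_rhom rhom_mapc] rhom_comp[OF h mp_eval_rhom]])
     (simp_all add: map_mc map_var)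

lemma map_single_hom: "Poly_Mapping.map h (Poly_Mapping.single m c) = Poly_Mapping.single m (h c)"
  by (simp add: rhom_0[OF h])

lemma pderiv_map: "mp_pderiv i (Poly_Mapping.map h f) = Poly_Mapping.map h (mp_pderiv i f)"
proof -
  have "Poly_Mapping.keys (Poly_Mapping.map h f) \<subseteq> Poly_Mapping.keys f"
    by (auto simp: in_keys_iff lookup_map_hom rhom_0[OF h])
  hence "mp_pderiv i (Poly_Mapping.map h f) = (\<Sum>m\<in>Poly_Mapping.keys f. Poly_Mapping.single (m - Poly_Mapping.single i 1)
            (of_nat (Poly_Mapping.lookup m i) * h (Poly_Mapping.lookup f m)))"
    by (subst pderiv_superset[of "Poly_Mapping.keys f"]) (auto simp: lookup_map_hom rhom_0[OF h])
  also have "\<dots> = Poly_Mapping.map h (mp_pderiv i f)"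
    unfolding mp_pderiv_def rhom_sum[OF rhom_mapc] map_single_hom
    by (simp add: rhom_mult[OF h] rhom_of_nat[OF h])
  finally show ?thesis .
qed

end

lemma map_map_pm: "h 0 = 0 \<Longrightarrow> g 0 = 0 \<Longrightarrow> Poly_Mapping.map g (Poly_Mapping.map h f) = Poly_Mapping.map (\<lambda>x. g (h x)) f"
  by (intro poly_mapping_eqI) (simp add: lookup_map_hom)

lemma map_inj_pm: "inj h \<Longrightarrow> h 0 = 0 \<Longrightarrow> Poly_Mapping.map h f = Poly_Mapping.map h g \<Longrightarrow> f = g"
  by (metis poly_mapping_eqI lookup_map_hom injD)

lemma lookup_mc_mult: "Poly_Mapping.lookup (mc c * f) m = c * Poly_Mapping.lookup (f :: 'a::comm_ring_1 mpoly) m"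
  by (simp add: mc_def mult_map_scale_conv_mult[symmetric] lookup_map_hom)


lemma ff_pow_card:
  fixes x :: "'a::field"
  assumes fin: "finite (UNIV :: 'a set)"
  shows "x ^ card (UNIV :: 'a set) = x"
proof (cases "x = 0")
  case False
  have cpos: "card (UNIV :: 'a set) > 0" using fin by (simp add: card_gt_0_iff)
  have "x * (\<Prod>y\<in>UNIV-{0}. x * y) = x * x ^ (card (UNIV :: 'a set) - 1) * \<Prod>(UNIV-{0})"
    using fin by (simp add: prod.distrib mult_ac card_Diff_singleton)
  also have "x * x ^ (card (UNIV :: 'a set) - 1) = x ^ Suc (card (UNIV :: 'a set) - 1)"
    by (subst power_Suc) auto
  also have "Suc (card (UNIV :: 'a set) - 1) = card (UNIV :: 'a set)"
    using cpos by simp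
  also have "(\<Prod>y\<in>UNIV-{0}. x * y) = (\<Prod>y\<in>UNIV-{0}. y)"
    by (rule prod.reindex_bij_witness[of _ "\<lambda>y. y / x" "\<lambda>y. x * y"]) (use False in auto)
  finally show ?thesis
    using fin by (simp add: prod_zero_iff)
next
  case True
  have "card (UNIV :: 'a set) > 0" using fin by (simp add: card_gt_0_iff)
  thus ?thesis using True by (simp add: power_0_left)
qed

lemma ff_card_ge2:
  assumes fin: "finite (UNIV :: 'a::field set)"
  shows "card (UNIV :: 'a set) \<ge> 2"
proof -
  have "card {0, 1::'a} \<le> card (UNIV :: 'a set)" using fin by (rule card_mono) auto
  thus ?thesis by simp
qed

lemma ff_binom_vanish:
  fixes dummy :: "'a::field"
  assumes fin: "finite (UNIV :: 'a set)" and j: "0 < j" "j < card (UNIV :: 'a set)"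
  shows "of_nat (card (UNIV :: 'a set) choose j) = (0::'a)"
proof -
  define q where "q = card (UNIV :: 'a set)"
  have q2: "q \<ge> 2" unfolding q_def by (rule ff_card_ge2[OF fin])
  define D :: "'a poly" where "D = [:1, 1:] ^ q - monom 1 q - 1"
  have cD: "coeff D k = (if 0 < k \<and> k < q then of_nat (q choose k) else 0)" for k
  proof -
    consider "k = 0" | "0 < k \<and> k < q" | "k = q" | "k > q" by linarith
    thus ?thesis
    proof cases
      case 1 thus ?thesis using q2 by (simp add: D_def coeff_linear_poly_power)
    next
      case 2 thus ?thesis by (simp add: D_def coeff_linear_poly_power)
    next
      case 3 thus ?thesis using q2 by (simp add: D_def coeff_linear_power)
    next
      case 4
      have "degree ([:1, 1::'a:] ^ q) \<le> q" using degree_power_le[of "[:1, 1::'a:]" q] by simp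
      hence "coeff ([:1, 1::'a:] ^ q) k = 0" using 4 by (intro coeff_eq_0) simp
      thus ?thesis using 4 by (simp add: D_def)
    qed
  qed
  have roots: "poly D x = 0" for x
  proof -
    have "(1 + x) ^ q = 1 + x" "x ^ q = x" using ff_pow_card[OF fin] unfolding q_def by blast+
    thus ?thesis by (simp add: D_def poly_monom)
  qed
  have "D = 0"
  proof (rule ccontr)
    assume "D \<noteq> 0"
    hence "card {x. poly D x = 0} \<le> degree D" by (rule card_poly_roots_bound)
    moreover have "{x. poly D x = 0} = UNIV" using roots by auto
    moreover have "degree D \<le> q - 1" using cD by (intro degree_le) auto
    ultimately show False using q2 unfolding q_def by simp
  qed
  hence "coeff D j = 0" by simp
  thus ?thesis using cD[of j] j unfolding q_def by simp
qed

section \<open>The Frobenius map on an extension\<close>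

context
  fixes emb :: "'a::{finite,field} \<Rightarrow> 'b::field"
  assumes h: "rhom emb"
begin

lemma qq2: "(card (UNIV :: 'a set)) \<ge> 2" by (rule ff_card_ge2) simp

lemma frob_add: "(x + y) ^ (card (UNIV :: 'a set)) = x ^ (card (UNIV :: 'a set)) + (y::'b) ^ (card (UNIV :: 'a set))"
proof -
  have vz: "of_nat ((card (UNIV :: 'a set)) choose k) = (0::'b)" if "0 < k" "k < (card (UNIV :: 'a set))" for k
    using rhom_of_nat[OF h, of "(card (UNIV :: 'a set)) choose k"] ff_binom_vanish[of k, where 'a='a] that rhom_0[OF h] by simp
  have "(x + y) ^ (card (UNIV :: 'a set)) = (\<Sum>k\<le>(card (UNIV :: 'a set)). of_nat ((card (UNIV :: 'a set)) choose k) * x ^ k * y ^ ((card (UNIV :: 'a set)) - k))" by (rule binomial_ring)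
  also have "\<dots> = (\<Sum>k\<in>{0, (card (UNIV :: 'a set))}. of_nat ((card (UNIV :: 'a set)) choose k) * x ^ k * y ^ ((card (UNIV :: 'a set)) - k))"
    by (rule sum.mono_neutral_right) (use vz qq2 in auto)
  also have "\<dots> = x ^ (card (UNIV :: 'a set)) + y ^ (card (UNIV :: 'a set))" using qq2 by simp
  finally show ?thesis .
qed

lemma rhom_frob: "rhom (\<lambda>y::'b. y ^ (card (UNIV :: 'a set)))"
  by (rule rhomI) (simp_all add: frob_add power_mult_distrib power_0_left)

lemma frob_emb: "emb a ^ (card (UNIV :: 'a set)) = emb a"
  by (metis rhom_power[OF h] ff_pow_card finite_UNIV)

lemma frob_fixed:
  assumes "y ^ (card (UNIV :: 'a set)) = (y::'b)"
  shows "y \<in> range emb"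
proof -
  define Q :: "'b poly" where "Q = monom 1 (card (UNIV :: 'a set)) - [:0, 1:]"
  have cQ: "coeff Q (card (UNIV :: 'a set)) = 1" using qq2 by (simp add: Q_def coeff_pCons split: nat.split)
  hence Q0: "Q \<noteq> 0" by auto
  have dQ: "degree Q \<le> (card (UNIV :: 'a set))" unfolding Q_def using qq2
    by (intro degree_diff_le) (simp_all add: degree_monom_le)
  have rootsQ: "poly Q z = 0 \<longleftrightarrow> z ^ (card (UNIV :: 'a set)) = z" for z by (simp add: Q_def poly_monom)
  have fin: "finite {z. poly Q z = 0}" using Q0 by (rule poly_roots_finite)
  have sub: "range emb \<subseteq> {z. poly Q z = 0}" using frob_emb rootsQ by auto
  have "card (range emb) = (card (UNIV :: 'a set))" using rhom_field_inj[OF h] by (simp add: card_image)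
  moreover have "card {z. poly Q z = 0} \<le> (card (UNIV :: 'a set))" using card_poly_roots_bound[OF Q0] dQ by simp
  ultimately have "range emb = {z. poly Q z = 0}"
    using card_subset_eq[OF fin sub] card_mono[OF fin sub] by simp
  thus ?thesis using assms rootsQ by auto
qed

end

lemma frob_surj:
  fixes c :: "'b::alg_closed_field"
  assumes "k > 0"
  shows "\<exists>x. x ^ k = c"
proof -
  define Q :: "'b poly" where "Q = monom 1 k - [:c:]"
  have "coeff Q k = 1" using assms by (simp add: Q_def coeff_pCons split: nat.split)
  hence "degree Q \<ge> k" by (metis le_degree one_neq_zero)
  hence "degree Q > 0" using assms by simp
  then obtain x where "poly Q x = 0" using alg_closed_imp_poly_has_root by blast
  thus ?thesis by (auto simp: Q_def poly_monom)
qed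

lemma alg_closed_infinite: "infinite (UNIV :: 'b::alg_closed_field set)"
proof
  assume fin: "finite (UNIV :: 'b set)"
  define c where "c = card (UNIV :: 'b set)"
  have c2: "c \<ge> 2" unfolding c_def by (rule ff_card_ge2[OF fin])
  define Q :: "'b poly" where "Q = monom 1 c - [:0, 1:] + 1"
  have "coeff Q c = 1" using c2 by (simp add: Q_def coeff_pCons split: nat.split)
  hence "degree Q \<ge> c" by (metis le_degree one_neq_zero)
  hence "degree Q > 0" using c2 by simp
  then obtain r where "poly Q r = 0" using alg_closed_imp_poly_has_root by blast
  hence "r ^ c - r + 1 = 0" by (simp add: Q_def poly_monom)
  moreover have "r ^ c = r" unfolding c_def by (rule ff_pow_card[OF fin])
  ultimately show False by simp
qed


lemma eval_unit_nz:
  fixes f :: "'b::field mpoly"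
  assumes "f dvd 1" shows "mp_eval f x \<noteq> 0"
proof
  assume z: "mp_eval f x = 0"
  obtain g where fg: "1 = f * g" using assms by (auto elim: dvdE)
  have "mp_eval (f * g) x = mp_eval f x * mp_eval g x" by (rule rhom_mult[OF mp_eval_rhom])
  hence "mp_eval (f * g) x = 0" using z by simp
  moreover have "mp_eval (f * g) x = 1" using fg rhom_1[OF mp_eval_rhom, of x] by metis
  ultimately show False by simp
qed

lemma irr_unit_left:
  fixes a p :: "'a::idom"
  assumes u: "a dvd 1" and p: "irreducible p"
  shows "irreducible (a * p)"
proof (rule irreducibleI)
  obtain a' where aa: "1 = a * a'" using u by (auto elim: dvdE)
  show "a * p \<noteq> 0" using p aa by auto
  show "\<not> a * p dvd 1"
  proof
    assume "a * p dvd 1"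
    hence "p dvd 1" by (meson dvd_mult_right)
    thus False using p by (simp add: irreducible_def)
  qed
  fix x y assume e: "a * p = x * y"
  have "p = (a' * x) * y" using e aa by (metis mult.assoc mult.commute mult_1)
  hence "a' * x dvd 1 \<or> y dvd 1" using irreducibleD[OF p] by blast
  thus "x dvd 1 \<or> y dvd 1"
  proof
    assume ax: "a' * x dvd 1"
    have "a * (a' * x) dvd 1" using mult_dvd_mono[OF u ax] by simp
    hence "x dvd 1" using aa by (metis mult.assoc mult_1)
    thus ?thesis ..
  qed simp
qed

lemma irr_unit_right:
  fixes a p :: "'a::idom"
  shows "a dvd 1 \<Longrightarrow> irreducible p \<Longrightarrow> irreducible (p * a)"
  using irr_unit_left[of a p] by (simp add: mult.commute)

lemma vanishing_irr_factor:
  fixes f :: "'b::field mpoly"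
  shows "f \<noteq> 0 \<Longrightarrow> mp_eval f x = 0 \<Longrightarrow> \<exists>G H. f = G * H \<and> irreducible G \<and> mp_eval G x = 0"
proof (induction "mu f" arbitrary: f rule: less_induct)
  case less
  show ?case
  proof (cases "irreducible f")
    case True thus ?thesis using less.prems(2) by (intro exI[of _ f] exI[of _ 1]) simp
  next
    case False
    have nu: "\<not> f dvd 1" using eval_unit_nz less.prems(2) by blast
    have "\<exists>a b. f = a * b \<and> \<not> a dvd 1 \<and> \<not> b dvd 1"
    proof (rule ccontr)
      assume na: "\<not> (\<exists>a b. f = a * b \<and> \<not> a dvd 1 \<and> \<not> b dvd 1)"
      have "irreducible f"
      proof (rule irreducibleI)
        show "f \<noteq> 0" "\<not> f dvd 1" using less.prems(1) nu by blast+
        show "a dvd 1 \<or> b dvd 1" if "f = a * b" for a b using na that by blast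
      qed
      thus False using False by blast
    qed
    then obtain a b where ab: "f = a * b" "\<not> a dvd 1" "\<not> b dvd 1" by blast
    have nz: "a \<noteq> 0" "b \<noteq> 0" using less.prems(1) ab(1) by auto
    have mua: "mu a \<noteq> 0" using unit_iff_mu[of a] ab(2) nz(1) by simp
    have mub: "mu b \<noteq> 0" using unit_iff_mu[of b] ab(3) nz(2) by simp
    have muf: "mu f = mu a + mu b" using mu_mult[OF nz] ab(1) by simp
    have "mp_eval a x * mp_eval b x = 0" using less.prems(2) ab(1) by (simp add: rhom_mult[OF mp_eval_rhom])
    hence "mp_eval a x = 0 \<or> mp_eval b x = 0" by simp
    thus ?thesis
    proof
      assume a0: "mp_eval a x = 0"
      have "mu a < mu f" using muf mub by simp
      then obtain G H where "a = G * H" "irreducible G" "mp_eval G x = 0"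
        using less.hyps[OF _ nz(1) a0] by blast
      thus ?thesis using ab(1) by (intro exI[of _ G] exI[of _ "H * b"]) (simp add: mult.assoc)
    next
      assume b0: "mp_eval b x = 0"
      have "mu b < mu f" using muf mua by simp
      then obtain G H where "b = G * H" "irreducible G" "mp_eval G x = 0"
        using less.hyps[OF _ nz(2) b0] by blast
      thus ?thesis using ab(1) by (intro exI[of _ G] exI[of _ "a * H"]) (simp add: mult_ac)
    qed
  qed
qed

lemma map_id_pm: "Poly_Mapping.map (\<lambda>x. x) f = f"
  by (intro poly_mapping_eqI) (simp add: lookup_map_hom)

lemma main_irred:
  fixes F :: "'a::{finite,field} mpoly" and emb :: "'a \<Rightarrow> 'b::alg_closed_field"
  assumes h: "rhom emb" and irr: "irreducible F" and smooth: "smooth_point n F P"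
  shows "irreducible (Poly_Mapping.map emb F)"
proof -
  define F' where "F' = Poly_Mapping.map emb F"
  define P' where "P' = (\<lambda>i. emb (P i))"
  define \<sigma> where "\<sigma> = (\<lambda>y::'b. y ^ card (UNIV :: 'a set))"
  have injE: "inj emb" by (rule rhom_field_inj[OF h])
  obtain i0 where ev0: "mp_eval F P = 0" and d0: "mp_eval (mp_pderiv i0 F) P \<noteq> 0"
    using smooth unfolding smooth_point_def by blast
  have evF': "mp_eval F' P' = 0"
    unfolding F'_def P'_def using eval_map[OF h, of F P] ev0 rhom_0[OF h] by simp
  have dF': "mp_eval (mp_pderiv i0 F') P' \<noteq> 0"
  proof -
    have "mp_eval (mp_pderiv i0 F') P' = emb (mp_eval (mp_pderiv i0 F) P)"
      unfolding F'_def P'_def pderiv_map[OF h] by (rule eval_map[OF h])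
    thus ?thesis using d0 injE rhom_0[OF h] by (metis injD)
  qed
  have K: False if "F' = A * B" "mp_eval A P' = 0" "mp_eval B P' = 0" for A B
    using dF' that eval_pderiv_mult[of i0 A B P'] by simp
  have F0: "F \<noteq> 0" using irr by auto
  have F'0: "F' \<noteq> 0"
  proof
    assume "F' = 0"
    hence "Poly_Mapping.map emb F = Poly_Mapping.map emb 0" unfolding F'_def by (simp add: rhom_0[OF rhom_mapc[OF h]])
    thus False using map_inj_pm[OF injE rhom_0[OF h]] F0 by blast
  qed
  obtain G H where GH: "F' = G * H" "irreducible G" "mp_eval G P' = 0"
    using vanishing_irr_factor[OF F'0 evF'] by blast
  have HP: "mp_eval H P' \<noteq> 0" using K GH by blast
  have G0: "G \<noteq> 0" using GH by auto
  then obtain m0 where m0: "m0 \<in> Poly_Mapping.keys G" by (metis ex_in_conv keys_eq_empty)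
  define g0 where "g0 = Poly_Mapping.lookup G m0"
  have g00: "g0 \<noteq> 0" using m0 by (simp add: g0_def in_keys_iff)
  define G1 where "G1 = mc (inverse g0) * G"
  define H1 where "H1 = mc g0 * H"
  have mcinv: "mc (inverse g0) * mc g0 = 1" using g00
    by (simp add: rhom_mult[OF rhom_mc, symmetric] rhom_1[OF rhom_mc])
  have FGH1: "F' = G1 * H1" unfolding G1_def H1_def using GH(1) mcinv by (metis mult.assoc mult.left_commute mult_1)
  have G1i: "irreducible G1" unfolding G1_def using GH(2) mc_unit[of "inverse g0"] g00
    by (intro irr_unit_left) simp_all
  have G1m0: "Poly_Mapping.lookup G1 m0 = 1" unfolding G1_def using g00 by (simp add: lookup_mc_mult g0_def)
  have G1P: "mp_eval G1 P' = 0" unfolding G1_def using GH(3) by (simp add: rhom_mult[OF mp_eval_rhom])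
  have H1P: "mp_eval H1 P' \<noteq> 0" unfolding H1_def using HP g00 by (simp add: rhom_mult[OF mp_eval_rhom])
  have G10: "G1 \<noteq> 0" using G1i by auto
  have hs: "rhom \<sigma>" unfolding \<sigma>_def by (rule rhom_frob[OF h])
  have s_emb: "\<sigma> (emb a) = emb a" for a unfolding \<sigma>_def by (rule frob_emb[OF h])
  have s_inj: "inj \<sigma>" by (rule rhom_field_inj[OF hs])
  have s_surj: "surj \<sigma>" unfolding \<sigma>_def using frob_surj[of "card (UNIV :: 'a set)"] qq2[OF h]
    by (metis surjI gr0I not_numeral_le_zero)
  define \<tau> where "\<tau> = inv \<sigma>"
  have st: "\<sigma> (\<tau> y) = y" for y unfolding \<tau>_def by (rule surj_f_inv_f[OF s_surj])
  have ts: "\<tau> (\<sigma> y) = y" for y unfolding \<tau>_def by (rule inv_f_f[OF s_inj])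
  have ht: "rhom \<tau>"
  proof (rule rhomI)
    show "\<tau> 0 = 0" using ts[of 0] rhom_0[OF hs] by simp
    show "\<tau> 1 = 1" using ts[of 1] rhom_1[OF hs] by simp
    fix x y
    show "\<tau> (x + y) = \<tau> x + \<tau> y" using ts st rhom_add[OF hs] by metis
    show "\<tau> (x * y) = \<tau> x * \<tau> y" using ts st rhom_mult[OF hs] by metis
  qed
  define S :: "'b mpoly \<Rightarrow> 'b mpoly" where "S = Poly_Mapping.map \<sigma>"
  define T :: "'b mpoly \<Rightarrow> 'b mpoly" where "T = Poly_Mapping.map \<tau>"
  interpret S_iso: riso S T
  proof unfold_locales
    show "rhom S" unfolding S_def by (rule rhom_mapc[OF hs])
    show "rhom T" unfolding T_def by (rule rhom_mapc[OF ht])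
    fix x
    show "T (S x) = x" unfolding S_def T_def
      by (simp add: map_map_pm rhom_0[OF hs] rhom_0[OF ht] ts map_id_pm)
    show "S (T x) = x" unfolding S_def T_def
      by (simp add: map_map_pm rhom_0[OF hs] rhom_0[OF ht] st map_id_pm)
  qed
  have SF': "S F' = F'" unfolding S_def F'_def
    by (simp add: map_map_pm rhom_0[OF hs] rhom_0[OF h] s_emb)
  have SG1i: "irreducible (S G1)" using G1i S_iso.irreducible_iff by blast
  have SFGH: "F' = S G1 * S H1" using SF' FGH1 by (metis rhom_mult[OF S_iso.hom1])
  have SG1P: "mp_eval (S G1) P' = 0"
  proof -
    have "mp_eval (S G1) (\<lambda>i. \<sigma> (P' i)) = \<sigma> (mp_eval G1 P')" unfolding S_def by (rule eval_map[OF hs])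
    moreover have "(\<lambda>i. \<sigma> (P' i)) = P'" unfolding P'_def using s_emb by simp
    ultimately show ?thesis using G1P rhom_0[OF hs] by simp
  qed
  have inf: "infinite (UNIV :: 'b set)" by (rule alg_closed_infinite)
  have "S G1 dvd G1 * H1" using SFGH FGH1 by (metis dvd_triv_left)
  hence "S G1 dvd G1 \<or> S G1 dvd H1" using mpoly_prime[OF inf SG1i] by blast
  moreover have "\<not> S G1 dvd H1"
  proof
    assume "S G1 dvd H1"
    then obtain k where "H1 = S G1 * k" by (auto elim: dvdE)
    hence "mp_eval H1 P' = 0" using SG1P by (simp add: rhom_mult[OF mp_eval_rhom])
    thus False using H1P by simp
  qed
  ultimately have "S G1 dvd G1" by blast
  then obtain u where u: "G1 = S G1 * u" by (auto elim: dvdE)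
  have "\<not> S G1 dvd 1" using SG1i by (simp add: irreducible_def)
  hence uu: "u dvd 1" using irreducibleD[OF G1i u] by blast
  hence "u \<noteq> 0" "mu u = 0" using unit_iff_mu by blast+
  hence "inR 0 u" using inR_iff_deg[of 0 u] unfolding mu_def by simp
  define c where "c = Poly_Mapping.lookup u 0"
  have uc: "u = mc c" using \<open>inR 0 u\<close> unfolding c_def by (metis inR_def Zn0_eq)
  have "Poly_Mapping.lookup G1 m0 = c * Poly_Mapping.lookup (S G1) m0"
    using u uc by (metis lookup_mc_mult mult.commute)
  also have "Poly_Mapping.lookup (S G1) m0 = \<sigma> 1"
    unfolding S_def using G1m0 by (simp add: lookup_map_hom rhom_0[OF hs])
  finally have "c = 1" using G1m0 rhom_1[OF hs] by simp
  hence "u = 1" using uc by (simp add: rhom_1[OF rhom_mc])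
  hence SG1: "S G1 = G1" using u by simp
  have SH1: "S H1 = H1" using SFGH FGH1 SG1 G10 by (metis mult_left_cancel)
  \<comment> \<open>Descent\<close>
  have descent: "\<exists>X0. X = Poly_Mapping.map emb X0" if SX: "S X = X" for X
  proof -
    define \<iota> where "\<iota> = inv emb"
    have i0: "\<iota> 0 = 0" unfolding \<iota>_def using rhom_0[OF h] injE by (metis inv_f_f)
    have "Poly_Mapping.lookup X m \<in> range emb" for m
    proof -
      have "\<sigma> (Poly_Mapping.lookup X m) = Poly_Mapping.lookup X m"
        using SX unfolding S_def by (metis lookup_map_hom rhom_0[OF hs])
      thus ?thesis unfolding \<sigma>_def by (rule frob_fixed[OF h])
    qed
    hence "emb (\<iota> (Poly_Mapping.lookup X m)) = Poly_Mapping.lookup X m" for m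
      unfolding \<iota>_def by (simp add: f_inv_into_f)
    hence "Poly_Mapping.map emb (Poly_Mapping.map \<iota> X) = X"
      by (intro poly_mapping_eqI) (simp add: lookup_map_hom rhom_0[OF h] i0)
    thus ?thesis by metis
  qed
  obtain G0 where G0: "G1 = Poly_Mapping.map emb G0" using descent[OF SG1] by blast
  obtain H0 where H0: "H1 = Poly_Mapping.map emb H0" using descent[OF SH1] by blast
  have "Poly_Mapping.map emb F = Poly_Mapping.map emb (G0 * H0)"
    using FGH1 G0 H0 unfolding F'_def by (simp add: rhom_mult[OF rhom_mapc[OF h]])
  hence "F = G0 * H0" using map_inj_pm[OF injE rhom_0[OF h]] by blast
  hence "G0 dvd 1 \<or> H0 dvd 1" using irreducibleD[OF irr] by blast
  moreover have "\<not> G0 dvd 1"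
  proof
    assume "G0 dvd 1"
    hence "G1 dvd 1" using G0 rhom_unit[OF rhom_mapc[OF h]] by metis
    thus False using G1i by (simp add: irreducible_def)
  qed
  ultimately have "H0 dvd 1" by blast
  hence "H1 dvd 1" using H0 rhom_unit[OF rhom_mapc[OF h]] by metis
  hence "irreducible (G1 * H1)" using G1i by (rule irr_unit_right)
  thus ?thesis using FGH1 unfolding F'_def by simp
qed

theorem lemma2p6:
  fixes F :: "'a::{finite,field} mpoly"
    and n d :: nat
    and P :: "nat \<Rightarrow> 'a"
  assumes hom: "mp_homogeneous_in n d F"
    and fnc: "frobenius_nonclassical (card (UNIV :: 'a set)) n F"
    and irr: "irreducible F"
    and smooth: "smooth_point n F P"
  shows "\<forall>emb :: 'a \<Rightarrow> 'b::alg_closed_field.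
           (emb 0 = 0 \<and> emb 1 = 1 \<and> (\<forall>x y. emb (x + y) = emb x + emb y)
              \<and> (\<forall>x y. emb (x * y) = emb x * emb y))
           \<longrightarrow> irreducible (Poly_Mapping.map emb F)"
proof (intro allI impI)
  fix emb :: "'a \<Rightarrow> 'b"
  assume "emb 0 = 0 \<and> emb 1 = 1 \<and> (\<forall>x y. emb (x + y) = emb x + emb y) \<and> (\<forall>x y. emb (x * y) = emb x * emb y)"
  hence "rhom emb" by (simp add: rhom_def)
  thus "irreducible (Poly_Mapping.map emb F)" using main_irred irr smooth by blast
qed


end
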